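(* Let $\Omega\in\mathcal{A}(r,L,R)$, let $e_1,\dots,e_M$ be electrodes with extended electrodes $\tilde e_1,\dots,\tilde e_M$. Then $E\circ P$, regarded as a bounded operator on $L^2_\ast(\partial\Omega)$, is the adjoint of $Q$, regarded as a bounded operator on $L^2_\ast(\partial\Omega)$; i.e. $\int_{\partial\Omega}(E\circ P)[f]\,g=\int_{\partial\Omega}f\,Q[g]$ for all $f,g\in L^2_\ast(\partial\Omega)$. In particular, $$\|\mathbbm{1}-E\circ P\|_{\mathcal{L}(H^{1/2}_\ast(\partial\Omega),L^2_\ast(\partial\Omega))}=\|\mathbbm{1}-Q\|_{\mathcal{L}(L^2_\ast(\partial\Omega),H^{-1/2}_\ast(\partial\Omega))}.$$
   Context: $N\ge2$; $\Omega\in\mathcal{A}(r,L,R)$ means: $\Omega\subset B_R(0)$ is a bounded domain such that for every $x\in\partial\Omega$, after a rigid change of coordinates, $\Omega\cap B_r(x)=\{y\in B_r(x):y_N<\varphi(y')\}$ with $\varphi$ Lipschitz of constant at most $L$. $L^2_\ast(\partial\Omega)$: $L^2(\partial\Omega)$ functions with zero mean. $H^1_\ast(\Omega)$: $u\in H^1(\Omega)$ with zero-mean trace. $H^{1/2}_\ast(\partial\Omega)$: traces of $H^1_\ast(\Omega)$ functions, with norm $\|\varphi\|=\inf\{\|\nabla u\|_{L^2(\Omega)}:u\in H^1_\ast(\Omega),\,u|_{\partial\Omega}=\varphi\}$. $H^{-1/2}_\ast(\partial\Omega)$: bounded linear functionals on $H^{1/2}(\partial\Omega)$ (trace space of $H^1(\Omega)$)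 vanishing on constants, normed by the dual norm of $H^{1/2}_\ast(\partial\Omega)$; $L^2_\ast(\partial\Omega)$ is embedded in it via $g\mapsto(\varphi\mapsto\int_{\partial\Omega}g\varphi)$. Electrodes: $e_1,\dots,e_M$ nonempty open pairwise disjoint subsets of $\partial\Omega$; $|e_m|=\mathcal{H}^{N-1}(e_m)$, $e=\bigcup_m e_m$. Extended electrodes: open sets $\tilde e_m\subset\partial\Omega$ with $e_m\subset\tilde e_m$, pairwise disjoint, and $\mathcal{H}^{N-1}(\partial\Omega\setminus\bigcup_m\tilde e_m)=0$. $PC=\{\sum_m \frac{I_m}{|e_m|}\chi_{e_m}: I\in\mathbb{R}^M\}$ with the $L^2(\partial\Omega)$ norm, $PC_\ast=PC\cap L^2_\ast(\partial\Omega)$; $\Phi:\mathbb{R}^M\to PC$, $\Phi(I)=\sum_m\frac{I_m}{|e_m|}\chi_{e_m}$. Operators: $Q(f)=\sum_m\frac{1}{|e_m|}\left(\int_{\tilde e_m}f\right)\chi_{e_m}$ for $f\in L^2(\partial\Omega)$; $P_e[f]=\sum_m(\fint_{e_m}f)\chi_{e_m}$; $P_{e\ast}[f]=f-(\fint_e f)\chi_e$ for $f\in PC$; $P=P_{e\ast}\circ P_e$; $P_\ast[f]=f-\fint_{\partial\Omega}f$; and for $\tilde V\in PC$ with $V=\Phi^{-1}(\tilde V)$, $E(\tilde V)=P_\ast\left[\sum_m\frac{V_m}{|e_m|}\chi_{\tilde e_m}\right]$. $\mathbbm{1}$ denotes the identity/inclusion. *)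

theory Defs
  imports "HOL-Analysis.Analysis"
begin

definition hausdorff_const :: "real \<Rightarrow> real" where
  "hausdorff_const s = pi powr (s / 2) / Gamma (s / 2 + 1) / 2 powr s"

definition hausdorff_outer :: "real \<Rightarrow> 'a::euclidean_space set \<Rightarrow> ennreal" where
  "hausdorff_outer s A =
     (SUP \<delta>\<in>{0<..}. INF C\<in>{C :: nat \<Rightarrow> 'a set. A \<subseteq> (\<Union>i. C i) \<and>
                                (\<forall>i. bounded (C i) \<and> diameter (C i) \<le> \<delta>)}.
        (\<Sum>i. ennreal (hausdorff_const s * diameter (C i) powr s)))"

definition hausdorff_measure :: "real \<Rightarrow> 'a::euclidean_space measure" where
  "hausdorff_measure s = measure_of UNIV (sets borel) (hausdorff_outer s)"

definition bdry_measure :: "'a::euclidean_space set \<Rightarrow> 'a measure" where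
  "bdry_measure \<Omega> = restrict_space (hausdorff_measure (real DIM('a) - 1)) (frontier \<Omega>)"

definition lip_domain_class :: "real \<Rightarrow> real \<Rightarrow> real \<Rightarrow> 'a::euclidean_space set \<Rightarrow> bool" where
  "lip_domain_class r L R \<Omega> \<longleftrightarrow>
     open \<Omega> \<and> connected \<Omega> \<and> \<Omega> \<noteq> {} \<and> \<Omega> \<subseteq> ball 0 R \<and>
     (\<forall>x\<in>frontier \<Omega>. \<exists>(T :: 'a \<Rightarrow> 'a) (b :: 'a) (\<phi> :: 'a \<Rightarrow> real).
        (\<forall>y z. dist (T y) (T z) = dist y z) \<and> surj T \<and> b \<in> Basis \<and>
        L-lipschitz_on {z. z \<bullet> b = 0} \<phi> \<and>
        \<Omega> \<inter> ball x r = {y \<in> ball x r. T y \<bullet> b < \<phi> (T y - (T y \<bullet> b) *\<^sub>R b)})"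

text \<open>\<open>f\<close> is \<open>C^\<infinity>\<close> on the whole space, \<open>D ds\<close> being the iterated partial
  derivative along the list of basis directions \<open>ds\<close>.\<close>
definition smooth_with :: "('a::euclidean_space \<Rightarrow> real) \<Rightarrow> ('a list \<Rightarrow> 'a \<Rightarrow> real) \<Rightarrow> bool" where
  "smooth_with f D \<longleftrightarrow> D [] = f \<and>
     (\<forall>ds x. (D ds has_derivative (\<lambda>h. \<Sum>b\<in>Basis. (h \<bullet> b) * D (b # ds) x)) (at x))"

definition grad_of :: "('a::euclidean_space list \<Rightarrow> 'a \<Rightarrow> real) \<Rightarrow> 'a \<Rightarrow> 'a" where
  "grad_of D x = (\<Sum>b\<in>Basis. D [b] x *\<^sub>R b)"

definition test_fun :: "'a::euclidean_space set \<Rightarrow> ('a \<Rightarrow> real) \<Rightarrow> ('a list \<Rightarrow> 'a \<Rightarrow> real) \<Rightarrow> bool" where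
  "test_fun \<Omega> \<psi> D \<longleftrightarrow> smooth_with \<psi> D \<and>
     compact (closure {x. \<psi> x \<noteq> 0}) \<and> closure {x. \<psi> x \<noteq> 0} \<subseteq> \<Omega>"

definition weak_gradient :: "'a::euclidean_space set \<Rightarrow> ('a \<Rightarrow> real) \<Rightarrow> ('a \<Rightarrow> 'a) \<Rightarrow> bool" where
  "weak_gradient \<Omega> u G \<longleftrightarrow>
     (\<forall>\<psi> D. test_fun \<Omega> \<psi> D \<longrightarrow> (\<forall>i\<in>Basis.
        integral\<^sup>L (lebesgue_on \<Omega>) (\<lambda>x. u x * D [i] x) =
        - integral\<^sup>L (lebesgue_on \<Omega>) (\<lambda>x. (G x \<bullet> i) * \<psi> x)))"

definition H1 :: "'a::euclidean_space set \<Rightarrow> ('a \<Rightarrow> real) \<Rightarrow> ('a \<Rightarrow> 'a) \<Rightarrow> bool" where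
  "H1 \<Omega> u G \<longleftrightarrow>
     u \<in> borel_measurable (lebesgue_on \<Omega>) \<and> integrable (lebesgue_on \<Omega>) (\<lambda>x. (u x)\<^sup>2) \<and>
     G \<in> borel_measurable (lebesgue_on \<Omega>) \<and> integrable (lebesgue_on \<Omega>) (\<lambda>x. (norm (G x))\<^sup>2) \<and>
     weak_gradient \<Omega> u G"

definition L2 :: "'a measure \<Rightarrow> ('a \<Rightarrow> real) \<Rightarrow> bool" where
  "L2 M f \<longleftrightarrow> f \<in> borel_measurable M \<and> integrable M (\<lambda>x. (f x)\<^sup>2)"

definition L2star :: "'a measure \<Rightarrow> ('a \<Rightarrow> real) \<Rightarrow> bool" where
  "L2star M f \<longleftrightarrow> L2 M f \<and> integral\<^sup>L M f = 0"

definition L2norm :: "'a measure \<Rightarrow> ('a \<Rightarrow> real) \<Rightarrow> real" where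
  "L2norm M f = sqrt (integral\<^sup>L M (\<lambda>x. (f x)\<^sup>2))"

definition trace_of :: "'a::euclidean_space set \<Rightarrow> ('a \<Rightarrow> real) \<Rightarrow> ('a \<Rightarrow> real) \<Rightarrow> bool" where
  "trace_of \<Omega> u \<phi> \<longleftrightarrow> L2 (bdry_measure \<Omega>) \<phi> \<and>
     (\<exists>G us Ds. H1 \<Omega> u G \<and> (\<forall>k. smooth_with (us k) (Ds k)) \<and>
        (\<lambda>k. integral\<^sup>L (lebesgue_on \<Omega>) (\<lambda>x. (us k x - u x)\<^sup>2) +
             integral\<^sup>L (lebesgue_on \<Omega>) (\<lambda>x. (norm (grad_of (Ds k) x - G x))\<^sup>2))
          \<longlonglongrightarrow> 0 \<and>
        (\<lambda>k. integral\<^sup>L (bdry_measure \<Omega>) (\<lambda>x. (us k x - \<phi> x)\<^sup>2)) \<longlonglongrightarrow> 0)"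

definition H12star :: "'a::euclidean_space set \<Rightarrow> ('a \<Rightarrow> real) \<Rightarrow> bool" where
  "H12star \<Omega> \<phi> \<longleftrightarrow> (\<exists>u. trace_of \<Omega> u \<phi>) \<and> integral\<^sup>L (bdry_measure \<Omega>) \<phi> = 0"

definition H12norm :: "'a::euclidean_space set \<Rightarrow> ('a \<Rightarrow> real) \<Rightarrow> real" where
  "H12norm \<Omega> \<phi> = Inf {sqrt (integral\<^sup>L (lebesgue_on \<Omega>) (\<lambda>x. (norm (G x))\<^sup>2)) | u G.
       H1 \<Omega> u G \<and> trace_of \<Omega> u \<phi> \<and> integral\<^sup>L (bdry_measure \<Omega>) \<phi> = 0}"

text \<open>Norm in \<open>H^{-1/2}_*(\<partial>\<Omega>)\<close> of the functional induced by \<open>h \<in> L^2_*(\<partial>\<Omega>)\<close>.\<close>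
definition Hm12norm :: "'a::euclidean_space set \<Rightarrow> ('a \<Rightarrow> real) \<Rightarrow> ereal" where
  "Hm12norm \<Omega> h = (SUP \<phi>\<in>{\<phi>. H12star \<Omega> \<phi> \<and> H12norm \<Omega> \<phi> \<le> 1}.
       ereal \<bar>integral\<^sup>L (bdry_measure \<Omega>) (\<lambda>x. h x * \<phi> x)\<bar>)"

definition electrodes :: "'a::euclidean_space set \<Rightarrow> ('m \<Rightarrow> 'a set) \<Rightarrow> bool" where
  "electrodes \<Omega> e \<longleftrightarrow>
     (\<forall>m. openin (top_of_set (frontier \<Omega>)) (e m) \<and> e m \<noteq> {}) \<and>
     (\<forall>m m'. m \<noteq> m' \<longrightarrow> e m \<inter> e m' = {})"

definition extended_electrodes ::
    "'a::euclidean_space set \<Rightarrow> ('m \<Rightarrow> 'a set) \<Rightarrow> ('m \<Rightarrow> 'a set) \<Rightarrow> bool" where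
  "extended_electrodes \<Omega> e et \<longleftrightarrow>
     (\<forall>m. openin (top_of_set (frontier \<Omega>)) (et m) \<and> e m \<subseteq> et m) \<and>
     (\<forall>m m'. m \<noteq> m' \<longrightarrow> et m \<inter> et m' = {}) \<and>
     emeasure (hausdorff_measure (real DIM('a) - 1)) (frontier \<Omega> - (\<Union>m. et m)) = 0"

definition Qop :: "'a measure \<Rightarrow> ('m::finite \<Rightarrow> 'a set) \<Rightarrow> ('m \<Rightarrow> 'a set) \<Rightarrow> ('a \<Rightarrow> real) \<Rightarrow> 'a \<Rightarrow> real" where
  "Qop M e et f = (\<lambda>x. \<Sum>m\<in>UNIV. (1 / measure M (e m)) * (LINT y:et m|M. f y) * indicator (e m) x)"

definition Pe_op :: "'a measure \<Rightarrow> ('m::finite \<Rightarrow> 'a set) \<Rightarrow> ('a \<Rightarrow> real) \<Rightarrow> 'a \<Rightarrow> real" where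
  "Pe_op M e f = (\<lambda>x. \<Sum>m\<in>UNIV. ((LINT y:e m|M. f y) / measure M (e m)) * indicator (e m) x)"

definition Pestar_op :: "'a measure \<Rightarrow> ('m::finite \<Rightarrow> 'a set) \<Rightarrow> ('a \<Rightarrow> real) \<Rightarrow> 'a \<Rightarrow> real" where
  "Pestar_op M e f = (\<lambda>x. f x - ((LINT y:(\<Union>m. e m)|M. f y) / measure M (\<Union>m. e m)) * indicator (\<Union>m. e m) x)"

definition P_op :: "'a measure \<Rightarrow> ('m::finite \<Rightarrow> 'a set) \<Rightarrow> ('a \<Rightarrow> real) \<Rightarrow> 'a \<Rightarrow> real" where
  "P_op M e = Pestar_op M e \<circ> Pe_op M e"

definition Pstar_op :: "'a measure \<Rightarrow> ('a \<Rightarrow> real) \<Rightarrow> 'a \<Rightarrow> real" where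
  "Pstar_op M f = (\<lambda>x. f x - integral\<^sup>L M f / measure M (space M))"

definition Phi_op :: "'a measure \<Rightarrow> ('m::finite \<Rightarrow> 'a set) \<Rightarrow> ('m \<Rightarrow> real) \<Rightarrow> 'a \<Rightarrow> real" where
  "Phi_op M e I = (\<lambda>x. \<Sum>m\<in>UNIV. (I m / measure M (e m)) * indicator (e m) x)"

definition E_op :: "'a measure \<Rightarrow> ('m::finite \<Rightarrow> 'a set) \<Rightarrow> ('m \<Rightarrow> 'a set) \<Rightarrow> ('a \<Rightarrow> real) \<Rightarrow> 'a \<Rightarrow> real" where
  "E_op M e et Vt = (let V = (THE V. Phi_op M e V = Vt) in
     Pstar_op M (\<lambda>x. \<Sum>m\<in>UNIV. (V m / measure M (e m)) * indicator (et m) x))"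

end

theory Submission
  imports Defs
begin

lemma ss_borel: "sigma_sets UNIV (sets borel) = (sets borel :: 'a::topological_space set set)"
  by (metis sets.sigma_sets_eq space_borel)

lemma hm_sets[simp]: "sets (hausdorff_measure s) = sets borel"
  unfolding hausdorff_measure_def by (simp add: sets_measure_of_conv ss_borel)

lemma hm_space[simp]: "space (hausdorff_measure s) = UNIV"
  unfolding hausdorff_measure_def by (simp add: space_measure_of_conv)

lemma hm_cases:
  "(\<forall>A::'a::euclidean_space set. emeasure (hausdorff_measure s) A = 0) \<or>
   (\<forall>A\<in>sets borel. emeasure (hausdorff_measure s) A = hausdorff_outer s (A::'a::euclidean_space set))"
  unfolding hausdorff_measure_def emeasure_measure_of_conv by (auto simp add: ss_borel)

lemma L2_prod_integrable:
  fixes f g :: "'a \<Rightarrow> real"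
  assumes "L2 M f" "L2 M g"
  shows "integrable M (\<lambda>x. f x * g x)"
proof (rule Bochner_Integration.integrable_bound[of M "\<lambda>x. ((f x)\<^sup>2 + (g x)\<^sup>2) / 2"])
  show "integrable M (\<lambda>x. ((f x)\<^sup>2 + (g x)\<^sup>2) / 2)" using assms unfolding L2_def by auto
  show "(\<lambda>x. f x * g x) \<in> borel_measurable M" using assms unfolding L2_def by auto
  show "AE x in M. norm (f x * g x) \<le> norm (((f x)\<^sup>2 + (g x)\<^sup>2) / 2)"
  proof (rule AE_I2)
    fix x
    have "2 * \<bar>f x * g x\<bar> \<le> (f x)\<^sup>2 + (g x)\<^sup>2"
    proof -
      have "0 \<le> (\<bar>f x\<bar> - \<bar>g x\<bar>)\<^sup>2" by simp
      then show ?thesis by (simp add: power2_eq_square algebra_simps abs_mult)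
    qed
    then show "norm (f x * g x) \<le> norm (((f x)\<^sup>2 + (g x)\<^sup>2) / 2)" by simp
  qed
qed

lemma L2_integrable:
  fixes f :: "'a \<Rightarrow> real"
  assumes "finite_measure M" "L2 M f"
  shows "integrable M f"
  using finite_measure.square_integrable_imp_integrable[OF assms(1)] assms(2) unfolding L2_def by auto

lemma L2_bounded:
  fixes f :: "'a \<Rightarrow> real"
  assumes "finite_measure M" "f \<in> borel_measurable M" "\<And>x. \<bar>f x\<bar> \<le> B"
  shows "L2 M f"
  unfolding L2_def
proof (intro conjI)
  show "f \<in> borel_measurable M" by fact
  show "integrable M (\<lambda>x. (f x)\<^sup>2)"
  proof (rule finite_measure.integrable_const_bound[OF assms(1), where B="B\<^sup>2"])
    show "AE x in M. norm ((f x)\<^sup>2) \<le> B\<^sup>2"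
    proof (intro AE_I2)
      fix x
      have "\<bar>f x\<bar>\<^sup>2 \<le> B\<^sup>2" using assms(3)[of x] by (intro power_mono) auto
      then show "norm ((f x)\<^sup>2) \<le> B\<^sup>2" by simp
    qed
    show "(\<lambda>x. (f x)\<^sup>2) \<in> borel_measurable M" using assms(2) by auto
  qed
qed

lemma L2_diff:
  fixes f g :: "'a \<Rightarrow> real"
  assumes "L2 M f" "L2 M g"
  shows "L2 M (\<lambda>x. f x - g x)"
  unfolding L2_def
proof (intro conjI)
  show "(\<lambda>x. f x - g x) \<in> borel_measurable M" using assms unfolding L2_def by auto
  show "integrable M (\<lambda>x. (f x - g x)\<^sup>2)"
  proof (rule Bochner_Integration.integrable_bound[of M "\<lambda>x. 2 * (f x)\<^sup>2 + 2 * (g x)\<^sup>2"])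
    show "integrable M (\<lambda>x. 2 * (f x)\<^sup>2 + 2 * (g x)\<^sup>2)" using assms unfolding L2_def by auto
    show "(\<lambda>x. (f x - g x)\<^sup>2) \<in> borel_measurable M" using assms unfolding L2_def by auto
    show "AE x in M. norm ((f x - g x)\<^sup>2) \<le> norm (2 * (f x)\<^sup>2 + 2 * (g x)\<^sup>2)"
    proof (intro AE_I2)
      fix x
      have "0 \<le> (f x + g x)\<^sup>2" by simp
      then have "(f x - g x)\<^sup>2 \<le> 2 * (f x)\<^sup>2 + 2 * (g x)\<^sup>2"
        by (simp add: power2_eq_square algebra_simps)
      then show "norm ((f x - g x)\<^sup>2) \<le> norm (2 * (f x)\<^sup>2 + 2 * (g x)\<^sup>2)" by simp
    qed
  qed
qed

lemma L2_scale:
  fixes f :: "'a \<Rightarrow> real"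
  assumes "L2 M f"
  shows "L2 M (\<lambda>x. c * f x)"
proof -
  have [measurable]: "f \<in> borel_measurable M" using assms unfolding L2_def by auto
  have "(\<lambda>x. c * f x) \<in> borel_measurable M" by measurable
  then show ?thesis using assms unfolding L2_def by (simp add: power_mult_distrib)
qed

lemma L2_zero: "L2star M (\<lambda>x. 0::real)"
  unfolding L2star_def L2_def by simp

lemma sup_dual:
  fixes u :: "'a \<Rightarrow> real"
  assumes fin: "finite_measure M" and u: "L2star M u"
  shows "(SUP g\<in>{g. L2star M g \<and> L2norm M g \<le> 1}. ereal \<bar>integral\<^sup>L M (\<lambda>x. g x * u x)\<bar>) = ereal (L2norm M u)"
proof -
  define n where "n = L2norm M u"
  have uL2: "L2 M u" using u unfolding L2star_def by auto
  have I0: "0 \<le> integral\<^sup>L M (\<lambda>x. (u x)\<^sup>2)" by (rule integral_nonneg_AE) auto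
  have n0: "0 \<le> n" unfolding n_def L2norm_def by simp
  have nsq: "n\<^sup>2 = integral\<^sup>L M (\<lambda>x. (u x)\<^sup>2)" unfolding n_def L2norm_def using I0 by simp
  have le: "\<bar>integral\<^sup>L M (\<lambda>x. g x * u x)\<bar> \<le> n" if g: "L2star M g" "L2norm M g \<le> 1" for g
  proof -
    have gL2: "L2 M g" using g unfolding L2star_def by auto
    have Ig0: "0 \<le> integral\<^sup>L M (\<lambda>x. (g x)\<^sup>2)" by (rule integral_nonneg_AE) auto
    have Ig: "integral\<^sup>L M (\<lambda>x. (g x)\<^sup>2) \<le> 1"
      using g(2) Ig0 unfolding L2norm_def by (simp add: real_sqrt_le_1_iff)
    have intgu: "integrable M (\<lambda>x. g x * u x)" by (rule L2_prod_integrable[OF gL2 uL2])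
    show ?thesis
    proof (cases "n = 0")
      case True
      then have "integral\<^sup>L M (\<lambda>x. (u x)\<^sup>2) = 0" using nsq by simp
      then have "AE x in M. (u x)\<^sup>2 = 0"
        using integral_nonneg_eq_0_iff_AE[of M "\<lambda>x. (u x)\<^sup>2"] uL2 unfolding L2_def by auto
      then have "AE x in M. g x * u x = 0" by eventually_elim simp
      then have "integral\<^sup>L M (\<lambda>x. g x * u x) = 0" by (rule integral_eq_zero_AE)
      then show ?thesis using n0 by simp
    next
      case False
      then have npos: "0 < n" using n0 by simp
      have pw: "\<bar>g x * u x\<bar> \<le> (n * (g x)\<^sup>2 + (u x)\<^sup>2 / n) / 2" for x
      proof -
        have "0 \<le> (n * \<bar>g x\<bar> - \<bar>u x\<bar>)\<^sup>2 / n" using npos by simp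
        also have "(n * \<bar>g x\<bar> - \<bar>u x\<bar>)\<^sup>2 / n = n * (g x)\<^sup>2 + (u x)\<^sup>2 / n - 2 * \<bar>g x * u x\<bar>"
          using npos by (simp add: power2_eq_square field_simps abs_mult)
        finally show ?thesis by simp
      qed
      have "\<bar>integral\<^sup>L M (\<lambda>x. g x * u x)\<bar> \<le> integral\<^sup>L M (\<lambda>x. \<bar>g x * u x\<bar>)"
        using integral_abs_bound[of M "\<lambda>x. g x * u x"] by simp
      also have "\<dots> \<le> integral\<^sup>L M (\<lambda>x. (n * (g x)\<^sup>2 + (u x)\<^sup>2 / n) / 2)"
        using gL2 uL2 intgu unfolding L2_def
        by (intro integral_mono pw) auto
      also have "\<dots> = (n * integral\<^sup>L M (\<lambda>x. (g x)\<^sup>2) + integral\<^sup>L M (\<lambda>x. (u x)\<^sup>2) / n) / 2"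
        using gL2 uL2 unfolding L2_def by simp
      also have "\<dots> \<le> (n * 1 + n\<^sup>2 / n) / 2"
        using Ig npos nsq by (intro divide_right_mono add_mono mult_left_mono) auto
      also have "\<dots> = n" using npos by (simp add: power2_eq_square)
      finally show ?thesis .
    qed
  qed
  have ge: "\<exists>g\<in>{g. L2star M g \<and> L2norm M g \<le> 1}. \<bar>integral\<^sup>L M (\<lambda>x. g x * u x)\<bar> = n"
  proof (cases "n = 0")
    case True
    then show ?thesis using L2_zero by (intro bexI[of _ "\<lambda>x. 0"]) (auto simp: L2norm_def)
  next
    case False
    then have npos: "0 < n" using n0 by simp
    let ?g = "\<lambda>x. (1/n) * u x"
    have "L2star M ?g" using u L2_scale[of M u "1/n"] unfolding L2star_def by simp
    moreover have "L2norm M ?g = 1"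
    proof -
      have "integral\<^sup>L M (\<lambda>x. (?g x)\<^sup>2) = integral\<^sup>L M (\<lambda>x. (u x)\<^sup>2) / n\<^sup>2"
        by (simp add: power_mult_distrib power_divide)
      moreover have "integral\<^sup>L M (\<lambda>x. (u x)\<^sup>2) \<noteq> 0" using nsq npos by (metis power_not_zero less_irrefl)
      ultimately show ?thesis unfolding L2norm_def using nsq by simp
    qed
    moreover have "integral\<^sup>L M (\<lambda>x. ?g x * u x) = n"
    proof -
      have "integral\<^sup>L M (\<lambda>x. ?g x * u x) = integral\<^sup>L M (\<lambda>x. (u x)\<^sup>2) / n"
        by (simp add: power2_eq_square)
      then show ?thesis using nsq npos by (metis nonzero_mult_div_cancel_left power2_eq_square less_irrefl)
    qed
    ultimately show ?thesis using npos by (intro bexI[of _ ?g]) auto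
  qed
  show ?thesis unfolding n_def[symmetric]
  proof (rule antisym)
    show "(SUP g\<in>{g. L2star M g \<and> L2norm M g \<le> 1}. ereal \<bar>integral\<^sup>L M (\<lambda>x. g x * u x)\<bar>) \<le> ereal n"
      using le by (intro SUP_least) auto
    show "ereal n \<le> (SUP g\<in>{g. L2star M g \<and> L2norm M g \<le> 1}. ereal \<bar>integral\<^sup>L M (\<lambda>x. g x * u x)\<bar>)"
      using ge by (metis (no_types, lifting) SUP_upper)
  qed
qed

context
  fixes M :: "'a measure" and e et :: "'m::finite \<Rightarrow> 'a set"
  assumes fin: "finite_measure M"
  and e_sets: "\<And>m. e m \<in> sets M" and et_sets: "\<And>m. et m \<in> sets M"
  and e_disj: "\<And>m m'. m \<noteq> m' \<Longrightarrow> e m \<inter> e m' = {}"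
  and et_disj: "\<And>m m'. m \<noteq> m' \<Longrightarrow> et m \<inter> et m' = {}"
  and e_pos: "\<And>m. 0 < measure M (e m)"
  and cov: "AE x in M. x \<in> (\<Union>m. et m)"
begin

lemma e_fin: "emeasure M A \<noteq> \<infinity>"
  using fin finite_measure.emeasure_finite by (metis infinity_ennreal_def)

lemma int_const[simp]: "integrable M (\<lambda>x. c::real)"
  using fin finite_measure.integrable_const by blast

lemma ind_sum_at:
  assumes "x \<in> e m"
  shows "(\<Sum>m'\<in>UNIV. k m' * indicator (e m') x) = (k m :: real)"
proof -
  have "\<And>m'. k m' * indicator (e m') x = (if m' = m then k m else 0)"
    using e_disj assms by (auto simp: indicator_def)
  then show ?thesis by simp
qed

lemma simple_integrable:
  assumes "\<And>m. A m \<in> sets M"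
  shows "integrable M (\<lambda>x. \<Sum>m\<in>UNIV. (c m::real) * indicator (A m) x)"
  using assms e_fin by (intro Bochner_Integration.integrable_sum integrable_mult_right) (auto simp: less_top[symmetric])

lemma simple_times_integral:
  assumes "\<And>m. A m \<in> sets M" "integrable M g"
  shows "integral\<^sup>L M (\<lambda>x. (\<Sum>m\<in>UNIV. (c m::real) * indicator (A m) x) * g x)
       = (\<Sum>m\<in>UNIV. c m * (LINT y:A m|M. g y))"
proof -
  have "integral\<^sup>L M (\<lambda>x. (\<Sum>m\<in>UNIV. (c m::real) * indicator (A m) x) * g x)
      = integral\<^sup>L M (\<lambda>x. \<Sum>m\<in>UNIV. c m * (indicator (A m) x * g x))"
    by (simp add: sum_distrib_right mult.assoc)
  also have "\<dots> = (\<Sum>m\<in>UNIV. c m * integral\<^sup>L M (\<lambda>x. indicator (A m) x * g x))"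
  proof -
    have "\<And>m. integrable M (\<lambda>x. c m * (indicator (A m) x * g x))"
      using assms integrable_mult_indicator[of _ M g] by simp
    then show ?thesis by (subst Bochner_Integration.integral_sum) auto
  qed
  finally show ?thesis by (simp add: set_lebesgue_integral_def)
qed

lemma union_ind: "indicator (\<Union>m. A m) x = (\<Sum>m\<in>UNIV. indicator (A m) x :: real)"
  if "\<And>m m'. m \<noteq> m' \<Longrightarrow> A m \<inter> A m' = {}" for A :: "'m \<Rightarrow> 'a set"
  using indicator_UN_disjoint[of UNIV A x] that by (simp add: disjoint_family_on_def)

lemma P_form:
  fixes f :: "'a \<Rightarrow> real"
  defines "a \<equiv> \<lambda>m. LINT y:e m|M. f y"
  defines "c \<equiv> \<lambda>m. a m / measure M (e m) - (\<Sum>m\<in>UNIV. a m) / measure M (\<Union>m. e m)"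
  shows "P_op M e f = (\<lambda>x. \<Sum>m\<in>UNIV. c m * indicator (e m) x)"
proof -
  have Pe: "Pe_op M e f = (\<lambda>x. \<Sum>m\<in>UNIV. (a m / measure M (e m)) * indicator (e m) x)"
    unfolding Pe_op_def a_def by simp
  have "(LINT y:(\<Union>m. e m)|M. Pe_op M e f y) = 
     integral\<^sup>L M (\<lambda>x. (\<Sum>m\<in>UNIV. (a m / measure M (e m)) * indicator (e m) x) * 1)"
    unfolding set_lebesgue_integral_def Pe
    by (rule Bochner_Integration.integral_cong) (auto simp: indicator_def sum_distrib_left)
  also have "\<dots> = (\<Sum>m\<in>UNIV. (a m / measure M (e m)) * (LINT y:e m|M. 1))"
    by (rule simple_times_integral) (auto simp: e_sets e_fin less_top)
  also have "\<dots> = (\<Sum>m\<in>UNIV. a m)"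
    using e_pos by (intro sum.cong refl) (simp add: set_lebesgue_integral_def e_sets sets.Int_space_eq2 less_imp_neq[symmetric])
  finally have I: "(LINT y:(\<Union>m. e m)|M. Pe_op M e f y) = (\<Sum>m\<in>UNIV. a m)" .
  show ?thesis
    unfolding P_op_def Pestar_op_def comp_def I
  proof (rule ext)
    fix x
    show "Pe_op M e f x - (\<Sum>m\<in>UNIV. a m) / measure M (\<Union>m. e m) * indicator (\<Union>m. e m) x =
         (\<Sum>m\<in>UNIV. c m * indicator (e m) x)"
      apply (subst union_ind[OF e_disj], assumption)
      by (simp only: Pe c_def left_diff_distrib sum_subtractf sum_distrib_left mult.assoc)
  qed
qed

lemma e_ne: "e m \<noteq> {}"
  using e_pos[of m] by auto

lemma EP_form:
  fixes f :: "'a \<Rightarrow> real"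
  defines "a \<equiv> \<lambda>m. LINT y:e m|M. f y"
  defines "c \<equiv> \<lambda>m. a m / measure M (e m) - (\<Sum>m\<in>UNIV. a m) / measure M (\<Union>m. e m)"
  shows "E_op M e et (P_op M e f) = Pstar_op M (\<lambda>x. \<Sum>m\<in>UNIV. c m * indicator (et m) x)"
proof -
  let ?V = "\<lambda>m. c m * measure M (e m)"
  have PF: "P_op M e f = (\<lambda>x. \<Sum>m\<in>UNIV. c m * indicator (e m) x)"
    unfolding c_def a_def by (rule P_form)
  have wne: "\<And>m. measure M (e m) \<noteq> 0" using e_pos less_imp_neq by metis
  have phi: "Phi_op M e ?V = P_op M e f"
    unfolding PF Phi_op_def using wne by simp
  have uniq: "V = ?V" if h: "Phi_op M e V = P_op M e f" for V
  proof
    fix m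
    obtain x where x: "x \<in> e m" using e_ne by blast
    have "Phi_op M e V x = V m / measure M (e m)"
      unfolding Phi_op_def using ind_sum_at[OF x, of "\<lambda>m. V m / measure M (e m)"] by simp
    moreover have "P_op M e f x = c m"
      unfolding PF using ind_sum_at[OF x, of c] by simp
    ultimately show "V m = ?V m" using h wne[of m] by (simp add: field_simps)
  qed
  have "(THE V. Phi_op M e V = P_op M e f) = ?V"
    using phi uniq by (rule the_equality)
  then show ?thesis
    unfolding E_op_def Let_def using wne by simp
qed

lemma sum_b:
  fixes g :: "'a \<Rightarrow> real"
  assumes "integrable M g"
  shows "(\<Sum>m\<in>UNIV. LINT y:et m|M. g y) = integral\<^sup>L M g"
proof -
  have "(\<Sum>m\<in>UNIV. LINT y:et m|M. g y) = (\<Sum>m\<in>UNIV. 1 * (LINT y:et m|M. g y))" by simp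
  also have "\<dots> = integral\<^sup>L M (\<lambda>x. (\<Sum>m\<in>UNIV. 1 * indicator (et m) x) * g x)"
    by (rule simple_times_integral[symmetric]) (auto simp: et_sets assms)
  also have "\<dots> = integral\<^sup>L M g"
  proof (rule integral_cong_AE)
    show "(\<lambda>x. (\<Sum>m\<in>UNIV. 1 * indicator (et m) x) * g x) \<in> borel_measurable M"
      using et_sets assms by auto
    show "g \<in> borel_measurable M" using assms by auto
    show "AE x in M. (\<Sum>m\<in>UNIV. 1 * indicator (et m) x) * g x = g x"
      using cov
    proof (rule AE_mp, intro AE_I2 impI)
      fix x assume "x \<in> (\<Union>m. et m)"
      then have "indicator (\<Union>m. et m) x = (1::real)" by simp
      then have "(\<Sum>m\<in>UNIV. indicator (et m) x) = (1::real)"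
        using union_ind[where A=et and x=x, OF et_disj] by simp
      then show "(\<Sum>m\<in>UNIV. 1 * indicator (et m) x) * g x = g x" by simp
    qed
  qed
  finally show ?thesis .
qed

lemma part1_abs:
  fixes f g :: "'a \<Rightarrow> real"
  assumes f: "integrable M f" and g: "integrable M g" and g0: "integral\<^sup>L M g = 0"
  shows "integral\<^sup>L M (\<lambda>x. E_op M e et (P_op M e f) x * g x) = integral\<^sup>L M (\<lambda>x. f x * Qop M e et g x)"
proof -
  define a where "a \<equiv> \<lambda>m. LINT y:e m|M. f y"
  define c where "c \<equiv> \<lambda>m. a m / measure M (e m) - (\<Sum>m\<in>UNIV. a m) / measure M (\<Union>m. e m)"
  define b where "b \<equiv> \<lambda>m. LINT y:et m|M. g y"
  define h where "h \<equiv> \<lambda>x. \<Sum>m\<in>UNIV. c m * indicator (et m) x"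
  define K where "K \<equiv> integral\<^sup>L M h / measure M (space M)"
  have EP: "E_op M e et (P_op M e f) = (\<lambda>x. h x - K)"
    unfolding EP_form h_def c_def a_def Pstar_op_def K_def by simp
  have hint: "integrable M h" unfolding h_def by (rule simple_integrable) (rule et_sets)
  have "integral\<^sup>L M (\<lambda>x. E_op M e et (P_op M e f) x * g x) = integral\<^sup>L M (\<lambda>x. h x * g x - K * g x)"
    unfolding EP by (simp add: algebra_simps)
  also have "\<dots> = integral\<^sup>L M (\<lambda>x. h x * g x)"
  proof -
    have "integrable M (\<lambda>x. h x * g x)"
      unfolding h_def sum_distrib_right using et_sets integrable_mult_indicator[OF _ g]
      by (intro Bochner_Integration.integrable_sum) (simp add: mult.assoc)
    then show ?thesis using g g0 by simp
  qed
  also have "\<dots> = (\<Sum>m\<in>UNIV. c m * b m)"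
    unfolding h_def b_def by (rule simple_times_integral) (auto simp: et_sets g)
  also have "\<dots> = (\<Sum>m\<in>UNIV. (a m / measure M (e m)) * b m) - (\<Sum>m\<in>UNIV. a m) / measure M (\<Union>m. e m) * (\<Sum>m\<in>UNIV. b m)"
    unfolding c_def by (simp add: left_diff_distrib sum_subtractf sum_distrib_left mult.assoc)
  also have "(\<Sum>m\<in>UNIV. b m) = 0" unfolding b_def using sum_b[OF g] g0 by simp
  also have "(\<Sum>m\<in>UNIV. (a m / measure M (e m)) * b m) = (\<Sum>m\<in>UNIV. (1 / measure M (e m) * b m) * a m)"
    by (simp add: algebra_simps)
  also have "\<dots> = integral\<^sup>L M (\<lambda>x. (\<Sum>m\<in>UNIV. (1 / measure M (e m) * b m) * indicator (e m) x) * f x)"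
    unfolding a_def by (rule simple_times_integral[symmetric]) (auto simp: e_sets f)
  also have "\<dots> = integral\<^sup>L M (\<lambda>x. f x * Qop M e et g x)"
    unfolding Qop_def b_def by (simp add: algebra_simps)
  finally show ?thesis by simp
qed

lemma simple_L2:
  assumes "\<And>m. A m \<in> sets M"
  shows "L2 M (\<lambda>x. (\<Sum>m\<in>UNIV. (c m::real) * indicator (A m) x) - k)"
proof (rule L2_bounded[OF fin, where B="(\<Sum>m\<in>UNIV. \<bar>c m\<bar>) + \<bar>k\<bar>"])
  have "(\<lambda>x. (\<Sum>m\<in>UNIV. (c m::real) * indicator (A m) x)) \<in> borel_measurable M"
    using simple_integrable[of A c] assms by (simp add: borel_measurable_integrable)
  then show "(\<lambda>x. (\<Sum>m\<in>UNIV. (c m::real) * indicator (A m) x) - k) \<in> borel_measurable M" by auto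
  fix x
  have "\<bar>\<Sum>m\<in>UNIV. c m * indicator (A m) x\<bar> \<le> (\<Sum>m\<in>UNIV. \<bar>c m * indicator (A m) x\<bar>)"
    by (rule sum_abs)
  also have "\<dots> \<le> (\<Sum>m\<in>UNIV. \<bar>c m\<bar>)"
    by (intro sum_mono) (auto simp: abs_mult indicator_def)
  finally show "\<bar>(\<Sum>m\<in>UNIV. c m * indicator (A m) x) - k\<bar> \<le> (\<Sum>m\<in>UNIV. \<bar>c m\<bar>) + \<bar>k\<bar>" by linarith
qed

lemma space_pos: "measure M (space M) \<noteq> 0"
proof -
  obtain m :: 'm where True by simp
  have "measure M (e m) \<le> measure M (space M)" using fin finite_measure.bounded_measure by blast
  then show ?thesis using e_pos[of m] by linarith
qed

lemma EP_L2_mean: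
  fixes f :: "'a \<Rightarrow> real"
  shows "L2star M (E_op M e et (P_op M e f))"
proof -
  define a where "a \<equiv> \<lambda>m. LINT y:e m|M. f y"
  define c where "c \<equiv> \<lambda>m. a m / measure M (e m) - (\<Sum>m\<in>UNIV. a m) / measure M (\<Union>m. e m)"
  define h where "h \<equiv> \<lambda>x. \<Sum>m\<in>UNIV. c m * indicator (et m) x"
  define K where "K \<equiv> integral\<^sup>L M h / measure M (space M)"
  have EP: "E_op M e et (P_op M e f) = (\<lambda>x. h x - K)"
    unfolding EP_form h_def c_def a_def Pstar_op_def K_def by simp
  have hint: "integrable M h" unfolding h_def by (rule simple_integrable) (rule et_sets)
  have "L2 M (\<lambda>x. h x - K)" unfolding h_def by (rule simple_L2) (rule et_sets)
  moreover have "integral\<^sup>L M (\<lambda>x. h x - K) = 0"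
    using hint space_pos fin by (simp add: K_def finite_measure.emeasure_finite)
  ultimately show ?thesis unfolding EP L2star_def by simp
qed

lemma Q_L2: "L2 M (Qop M e et g)"
proof -
  have "L2 M (\<lambda>x. (\<Sum>m\<in>UNIV. (1 / measure M (e m) * (LINT y:et m|M. g y)) * indicator (e m) x) - 0)"
    by (rule simple_L2) (rule e_sets)
  then show ?thesis unfolding Qop_def by simp
qed

lemma part2_abs:
  assumes S: "\<And>\<phi>. \<phi> \<in> S \<Longrightarrow> L2star M \<phi>"
  shows "(SUP \<phi>\<in>S. ereal (L2norm M (\<lambda>x. \<phi> x - E_op M e et (P_op M e \<phi>) x)))
       = (SUP g\<in>{g. L2star M g \<and> L2norm M g \<le> 1}. SUP \<phi>\<in>S.
            ereal \<bar>integral\<^sup>L M (\<lambda>x. (g x - Qop M e et g x) * \<phi> x)\<bar>)"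
proof -
  let ?G = "{g. L2star M g \<and> L2norm M g \<le> 1}"
  have key: "integral\<^sup>L M (\<lambda>x. (g x - Qop M e et g x) * \<phi> x)
           = integral\<^sup>L M (\<lambda>x. g x * (\<phi> x - E_op M e et (P_op M e \<phi>) x))"
    if g: "g \<in> ?G" and p: "\<phi> \<in> S" for g \<phi>
  proof -
    have gL: "L2 M g" and g0: "integral\<^sup>L M g = 0" using g unfolding L2star_def by auto
    have pL: "L2 M \<phi>" using S[OF p] unfolding L2star_def by auto
    have QL: "L2 M (Qop M e et g)" by (rule Q_L2)
    have EL: "L2 M (E_op M e et (P_op M e \<phi>))" using EP_L2_mean unfolding L2star_def by auto
    have i1: "integrable M (\<lambda>x. g x * \<phi> x)" by (rule L2_prod_integrable[OF gL pL])
    have i2: "integrable M (\<lambda>x. Qop M e et g x * \<phi> x)" by (rule L2_prod_integrable[OF QL pL])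
    have i3: "integrable M (\<lambda>x. g x * E_op M e et (P_op M e \<phi>) x)" by (rule L2_prod_integrable[OF gL EL])
    have "integral\<^sup>L M (\<lambda>x. (g x - Qop M e et g x) * \<phi> x)
        = integral\<^sup>L M (\<lambda>x. g x * \<phi> x - Qop M e et g x * \<phi> x)"
      by (simp add: algebra_simps)
    also have "\<dots> = integral\<^sup>L M (\<lambda>x. g x * \<phi> x) - integral\<^sup>L M (\<lambda>x. \<phi> x * Qop M e et g x)"
      using i1 i2 by (simp add: mult.commute)
    also have "integral\<^sup>L M (\<lambda>x. \<phi> x * Qop M e et g x) = integral\<^sup>L M (\<lambda>x. E_op M e et (P_op M e \<phi>) x * g x)"
      using part1_abs[OF L2_integrable[OF fin pL] L2_integrable[OF fin gL] g0] by simp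
    also have "integral\<^sup>L M (\<lambda>x. g x * \<phi> x) - \<dots> = integral\<^sup>L M (\<lambda>x. g x * \<phi> x - g x * E_op M e et (P_op M e \<phi>) x)"
      using i1 i3 by (simp add: mult.commute)
    also have "\<dots> = integral\<^sup>L M (\<lambda>x. g x * (\<phi> x - E_op M e et (P_op M e \<phi>) x))"
      by (simp add: algebra_simps)
    finally show ?thesis .
  qed
  have "(SUP g\<in>?G. SUP \<phi>\<in>S. ereal \<bar>integral\<^sup>L M (\<lambda>x. (g x - Qop M e et g x) * \<phi> x)\<bar>)
      = (SUP g\<in>?G. SUP \<phi>\<in>S. ereal \<bar>integral\<^sup>L M (\<lambda>x. g x * (\<phi> x - E_op M e et (P_op M e \<phi>) x))\<bar>)"
    using key by (intro SUP_cong refl) simp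
  also have "\<dots> = (SUP \<phi>\<in>S. SUP g\<in>?G. ereal \<bar>integral\<^sup>L M (\<lambda>x. g x * (\<phi> x - E_op M e et (P_op M e \<phi>) x))\<bar>)"
    by (rule SUP_commute)
  also have "\<dots> = (SUP \<phi>\<in>S. ereal (L2norm M (\<lambda>x. \<phi> x - E_op M e et (P_op M e \<phi>) x)))"
  proof (intro SUP_cong refl)
    fix \<phi> assume p: "\<phi> \<in> S"
    have "L2star M (\<lambda>x. \<phi> x - E_op M e et (P_op M e \<phi>) x)"
    proof -
      have pL: "L2 M \<phi>" and p0: "integral\<^sup>L M \<phi> = 0" using S[OF p] unfolding L2star_def by auto
      have EL: "L2 M (E_op M e et (P_op M e \<phi>))" and E0: "integral\<^sup>L M (E_op M e et (P_op M e \<phi>)) = 0"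
        using EP_L2_mean unfolding L2star_def by auto
      show ?thesis unfolding L2star_def
        using L2_diff[OF pL EL] p0 E0 L2_integrable[OF fin pL] L2_integrable[OF fin EL] by simp
    qed
    then show "(SUP g\<in>?G. ereal \<bar>integral\<^sup>L M (\<lambda>x. g x * (\<phi> x - E_op M e et (P_op M e \<phi>) x))\<bar>)
        = ereal (L2norm M (\<lambda>x. \<phi> x - E_op M e et (P_op M e \<phi>) x))"
      by (rule sup_dual[OF fin])
  qed
  finally show ?thesis by simp
qed

end

lemma hc_pos: "0 \<le> s \<Longrightarrow> 0 < hausdorff_const s"
  unfolding hausdorff_const_def by (intro divide_pos_pos) auto

lemma ho_upper:
  assumes "\<And>\<delta>. \<delta> > 0 \<Longrightarrow> \<exists>C. A \<subseteq> (\<Union>i. C i) \<and> (\<forall>i. bounded (C i) \<and> diameter (C i) \<le> \<delta>) \<and>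
              (\<Sum>i. ennreal (hausdorff_const s * diameter (C i) powr s)) \<le> K"
  shows "hausdorff_outer s A \<le> K"
  unfolding hausdorff_outer_def
proof (rule SUP_least)
  fix \<delta> :: real assume "\<delta> \<in> {0<..}"
  then obtain C where C: "A \<subseteq> (\<Union>i. C i)" "\<forall>i. bounded (C i) \<and> diameter (C i) \<le> \<delta>"
      "(\<Sum>i. ennreal (hausdorff_const s * diameter (C i) powr s)) \<le> K"
    using assms by force
  then show "(INF C\<in>{C. A \<subseteq> (\<Union>i. C i) \<and> (\<forall>i. bounded (C i) \<and> diameter (C i) \<le> \<delta>)}.
        (\<Sum>i. ennreal (hausdorff_const s * diameter (C i) powr s))) \<le> K"
    by (intro INF_lower2[of C]) auto
qed

lemma ho_lower:
  assumes "\<And>C. A \<subseteq> (\<Union>i. C i) \<Longrightarrow> (\<forall>i. bounded (C i) \<and> diameter (C i) \<le> 1) \<Longrightarrow>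
              K \<le> (\<Sum>i. ennreal (hausdorff_const s * diameter (C i) powr s))"
  shows "K \<le> hausdorff_outer s A"
  unfolding hausdorff_outer_def
  by (rule SUP_upper2[of 1]) (auto intro!: INF_greatest assms)

lemma ho_mono:
  assumes "A \<subseteq> B"
  shows "hausdorff_outer s A \<le> hausdorff_outer s B"
  unfolding hausdorff_outer_def
  using assms by (intro SUP_subset_mono order_refl INF_superset_mono) auto

lemma powr_le_pow:
  fixes x y :: real
  assumes "0 \<le> x" "x \<le> y" "1 \<le> d"
  shows "x powr real d \<le> y ^ d"
proof (cases "x = 0")
  case True
  then show ?thesis using assms by simp
next
  case False
  then have "x powr real d = x ^ d" using assms by (simp add: powr_realpow)
  also have "\<dots> \<le> y ^ d" using assms by (intro power_mono) auto
  finally show ?thesis .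
qed

lemma graph_finite:
  fixes A :: "'a::euclidean_space set" and F :: "'a \<Rightarrow> 'a"
  assumes N2: "DIM('a) \<ge> 2" and b: "b \<in> Basis" and Kc: "0 \<le> Kc" and r: "0 < r"
    and Fb: "\<And>y. y \<in> A \<Longrightarrow> F y \<bullet> b = 0"
    and Fr: "\<And>y. y \<in> A \<Longrightarrow> norm (F y - pc) < r"
    and Lip: "\<And>y z. y \<in> A \<Longrightarrow> z \<in> A \<Longrightarrow> norm (y - z) \<le> Kc * norm (F y - F z)"
  shows "hausdorff_outer (real DIM('a) - 1) A < \<infinity>"
proof -
  define N where "N = DIM('a)"
  define d where "d = N - 1"
  have d1: "1 \<le> d" using N2 unfolding d_def N_def by simp
  have sd: "real DIM('a) - 1 = real d" using N2 unfolding d_def N_def by simp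
  define hc where "hc = hausdorff_const (real d)"
  have hc: "0 < hc" unfolding hc_def by (rule hc_pos) simp
  define K where "K = hc * (Kc * N * (2*r + 2)) ^ d"
  have "hausdorff_outer (real d) A \<le> ennreal K"
  proof (rule ho_upper)
    fix \<delta> :: real assume \<delta>: "\<delta> > 0"
    define h where "h = min 1 (\<delta> / (Kc * N + 1))"
    have KN: "0 \<le> Kc * N" using Kc by simp
    have h0: "0 < h" unfolding h_def using \<delta> KN by simp
    have h1: "h \<le> 1" unfolding h_def by simp
    have hd: "Kc * N * h \<le> \<delta>"
    proof -
      have "Kc * N * h \<le> Kc * N * (\<delta> / (Kc * N + 1))"
        unfolding h_def using KN by (intro mult_left_mono) auto
      also have "\<dots> \<le> \<delta>" using KN \<delta> by (simp add: field_simps)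
      finally show ?thesis .
    qed
    define n where "n = nat \<lceil>r / h\<rceil>"
    have rn: "r \<le> real n * h" and nr: "real n * h < r + h"
    proof -
      have "r / h \<le> real n" unfolding n_def by linarith
      then show "r \<le> real n * h" using h0 by (simp add: field_simps)
      have "0 \<le> r / h" using r h0 by simp
      then have "real n = of_int \<lceil>r / h\<rceil>" unfolding n_def by simp
      then have "real n < r / h + 1" by linarith
      then show "real n * h < r + h" using h0 by (simp add: field_simps)
    qed
    define Bs where "Bs = Basis - {b}"
    have cardBs: "card Bs = d" unfolding Bs_def d_def N_def using b by (simp add: card_Diff_singleton)
    define Ks where "Ks = PiE Bs (\<lambda>_. {-int n..<int n})"
    have finKs: "finite Ks" unfolding Ks_def Bs_def by (intro finite_PiE) auto
    have cardKs: "card Ks = (2*n)^d"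
    proof -
      have "card Ks = (\<Prod>i\<in>Bs. card {-int n..<int n})" unfolding Ks_def Bs_def
        by (rule card_PiE) auto
      also have "\<dots> = (2*n)^d" using cardBs by (simp add: nat_mult_distrib)
      finally show ?thesis .
    qed
    define cell where "cell k = {y\<in>A. \<forall>i\<in>Bs. \<lfloor>((F y - pc) \<bullet> i) / h\<rfloor> = k i}" for k
    have cover: "\<exists>k\<in>Ks. y \<in> cell k" if y: "y \<in> A" for y
    proof
      let ?k = "restrict (\<lambda>i. \<lfloor>((F y - pc) \<bullet> i) / h\<rfloor>) Bs"
      show "y \<in> cell ?k" unfolding cell_def using y by simp
      show "?k \<in> Ks" unfolding Ks_def restrict_PiE_iff
      proof
        fix i assume i: "i \<in> Bs"
        then have "\<bar>(F y - pc) \<bullet> i\<bar> < real n * h"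
          using Basis_le_norm[of i "F y - pc"] Fr[OF y] rn unfolding Bs_def by auto
        then have "- real n < ((F y - pc) \<bullet> i) / h" "((F y - pc) \<bullet> i) / h < real n"
          using h0 by (auto simp: field_simps)
        then show "\<lfloor>((F y - pc) \<bullet> i) / h\<rfloor> \<in> {-int n..<int n}"
          by (auto simp: le_floor_iff floor_less_iff)
      qed
    qed
    have cdiam: "norm (y - z) \<le> Kc * N * h" if y: "y \<in> cell k" and z: "z \<in> cell k" for y z k
    proof -
      have yA: "y \<in> A" and zA: "z \<in> A" using y z unfolding cell_def by auto
      have comp: "\<bar>(F y - F z) \<bullet> i\<bar> \<le> h" if i: "i \<in> Basis" for i
      proof (cases "i = b")
        case True
        then show ?thesis using Fb[OF yA] Fb[OF zA] h0 by (simp add: inner_diff_left)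
      next
        case False
        then have iB: "i \<in> Bs" unfolding Bs_def using i by simp
        define u where "u = ((F y - pc) \<bullet> i) / h"
        define v where "v = ((F z - pc) \<bullet> i) / h"
        have fl: "\<lfloor>u\<rfloor> = \<lfloor>v\<rfloor>" using y z iB unfolding cell_def u_def v_def by auto
        have "\<bar>u - v\<bar> < 1"
          using fl by linarith
        moreover have "(F y - F z) \<bullet> i = (u - v) * h"
          unfolding u_def v_def using h0 by (simp add: inner_diff_left field_simps)
        ultimately show ?thesis using h0 by (simp add: abs_mult)
      qed
      have "norm (F y - F z) \<le> (\<Sum>i\<in>Basis. \<bar>(F y - F z) \<bullet> i\<bar>)" by (rule norm_le_l1)
      also have "\<dots> \<le> (\<Sum>i\<in>(Basis::'a set). h)" using comp by (intro sum_mono) auto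
      also have "\<dots> = N * h" unfolding N_def by simp
      finally have "norm (F y - F z) \<le> N * h" .
      then have "Kc * norm (F y - F z) \<le> Kc * (N * h)" using Kc by (intro mult_left_mono)
      then show ?thesis using Lip[OF yA zA] by (simp add: mult.assoc)
    qed
    have cbounded: "bounded (cell k)" for k
    proof (cases "cell k = {}")
      case True then show ?thesis by simp
    next
      case False
      then obtain y where y: "y \<in> cell k" by blast
      have "cell k \<subseteq> cball y (Kc * N * h)"
        using cdiam[OF y] by (auto simp: dist_norm)
      then show ?thesis using bounded_cball bounded_subset by blast
    qed
    have cdiam2: "diameter (cell k) \<le> Kc * N * h" for k
      using cdiam KN h0 by (intro diameter_le) auto
    obtain g where g: "bij_betw g {0..<card Ks} Ks" using ex_bij_betw_nat_finite[OF finKs] by blast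
    define C where "C i = (if i < card Ks then cell (g i) else {})" for i
    show "\<exists>C. A \<subseteq> (\<Union>i. C i) \<and> (\<forall>i. bounded (C i) \<and> diameter (C i) \<le> \<delta>) \<and>
              (\<Sum>i. ennreal (hausdorff_const (real d) * diameter (C i) powr real d)) \<le> ennreal K"
    proof (intro exI[of _ C] conjI allI)
      show "A \<subseteq> (\<Union>i. C i)"
      proof
        fix y assume "y \<in> A"
        then obtain k where k: "k \<in> Ks" "y \<in> cell k" using cover by blast
        then obtain i where "i \<in> {0..<card Ks}" "g i = k" using g unfolding bij_betw_def by force
        then show "y \<in> (\<Union>i. C i)" using k unfolding C_def by auto
      qed
      fix i
      show "bounded (C i)" unfolding C_def using cbounded by simp
      show "diameter (C i) \<le> \<delta>"
      proof (cases "i < card Ks")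
        case True
        then have "C i = cell (g i)" unfolding C_def by simp
        then show ?thesis using cdiam2[of "g i"] hd by (metis order_trans)
      next
        case False
        then have "C i = {}" unfolding C_def by simp
        then show ?thesis using \<delta> by simp
      qed
    next
      have "(\<Sum>i. ennreal (hausdorff_const (real d) * diameter (C i) powr real d))
          = (\<Sum>i\<in>{0..<card Ks}. ennreal (hausdorff_const (real d) * diameter (C i) powr real d))"
      proof (rule suminf_finite)
        show "finite {0..<card Ks}" by simp
        fix i assume "i \<notin> {0..<card Ks}"
        then have "C i = {}" unfolding C_def by simp
        then show "ennreal (hausdorff_const (real d) * diameter (C i) powr real d) = 0" by simp
      qed
      also have "\<dots> = ennreal (\<Sum>i\<in>{0..<card Ks}. hc * diameter (C i) powr real d)"
        unfolding hc_def[symmetric] by (rule sum_ennreal) (simp add: hc less_imp_le)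
      also have "\<dots> \<le> ennreal (\<Sum>i\<in>{0..<card Ks}. hc * (Kc * N * h) ^ d)"
      proof (rule ennreal_leI, rule sum_mono, rule mult_left_mono)
        fix i assume "i \<in> {0..<card Ks}"
        then have Ci: "C i = cell (g i)" unfolding C_def by simp
        show "diameter (C i) powr real d \<le> (Kc * N * h) ^ d"
          unfolding Ci by (rule powr_le_pow[OF diameter_ge_0[OF cbounded] cdiam2 d1])
        show "0 \<le> hc" using hc by simp
      qed
      also have "(\<Sum>i\<in>{0..<card Ks}. hc * (Kc * N * h) ^ d) = real (card Ks) * (hc * (Kc * N * h) ^ d)"
        by (simp only: sum_constant card_atLeastLessThan diff_zero)
      also have "\<dots> = hc * (2 * real n * (Kc * N * h)) ^ d"
      proof -
        have cn: "real (card Ks) = (2 * real n)^d" unfolding cardKs by simp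
        show ?thesis unfolding power_mult_distrib[of "2 * real n" "Kc * N * h"] cn by (simp only: mult_ac)
      qed
      also have "\<dots> \<le> ennreal K"
      proof (intro ennreal_leI)
        have "2 * real n * (Kc * N * h) = Kc * N * (2 * (real n * h))" by (simp add: algebra_simps)
        also have "\<dots> \<le> Kc * N * (2*r + 2)"
          using KN nr h1 by (intro mult_left_mono) auto
        finally have "2 * real n * (Kc * N * h) \<le> Kc * N * (2*r + 2)" .
        then have "(2 * real n * (Kc * N * h)) ^ d \<le> (Kc * N * (2*r + 2)) ^ d"
          using KN h0 by (intro power_mono) auto
        then show "hc * (2 * real n * (Kc * N * h)) ^ d \<le> K" unfolding K_def using hc by simp
      qed
      finally show "(\<Sum>i. ennreal (hausdorff_const (real d) * diameter (C i) powr real d)) \<le> ennreal K" .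
    qed
  qed
  then show ?thesis unfolding sd by (rule le_less_trans) simp
qed

lemma slab_measure:
  fixes c :: "'a::euclidean_space"
  assumes b: "b \<in> Basis" and w: "0 \<le> w"
  shows "emeasure lborel (cbox (\<Sum>j\<in>Basis. (if j = b then 0 else c \<bullet> j - w) *\<^sub>R j)
                              (\<Sum>j\<in>Basis. (if j = b then 1 else c \<bullet> j + w) *\<^sub>R j))
         = ennreal ((2*w)^(DIM('a) - 1))"
proof -
  define lo :: 'a where "lo = (\<Sum>j\<in>Basis. (if j = b then 0 else c \<bullet> j - w) *\<^sub>R j)"
  define hi :: 'a where "hi = (\<Sum>j\<in>Basis. (if j = b then 1 else c \<bullet> j + w) *\<^sub>R j)"
  have lo: "lo \<bullet> j = (if j = b then 0 else c \<bullet> j - w)" if "j \<in> Basis" for j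
    unfolding lo_def using that by simp
  have hi: "hi \<bullet> j = (if j = b then 1 else c \<bullet> j + w)" if "j \<in> Basis" for j
    unfolding hi_def using that by simp
  have le: "\<forall>j\<in>Basis. lo \<bullet> j \<le> hi \<bullet> j" using lo hi w by simp
  have "emeasure lborel (cbox lo hi) = ennreal (\<Prod>j\<in>Basis. (hi - lo) \<bullet> j)"
    using emeasure_lborel_cbox_eq[of lo hi] le by simp
  also have "(\<Prod>j\<in>Basis. (hi - lo) \<bullet> j) = (\<Prod>j\<in>Basis. (if j = b then 1 else 2 * w))"
    using lo hi by (intro prod.cong refl) (simp add: inner_diff_left)
  also have "\<dots> = (\<Prod>j\<in>Basis - {b}. 2 * w)"
    using b by (simp add: prod.If_cases Int_absorb1 Diff_eq Compl_eq)
  also have "\<dots> = (2*w)^(DIM('a) - 1)"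
    using b by (simp add: card_Diff_singleton)
  finally show ?thesis unfolding lo_def hi_def .
qed

lemma graph_pos:
  fixes A :: "'a::euclidean_space set" and F :: "'a \<Rightarrow> 'a"
  assumes N2: "DIM('a) \<ge> 2" and b: "b \<in> Basis" and rho: "0 < \<rho>" and p0b: "pc \<bullet> b = 0"
    and F1: "\<And>y z. norm (F y - F z) \<le> norm (y - z)"
    and onto: "\<And>p. p \<bullet> b = 0 \<Longrightarrow> norm (p - pc) < \<rho> \<Longrightarrow> p \<in> F ` A"
  shows "0 < hausdorff_outer (real DIM('a) - 1) A"
proof -
  define N where "N = DIM('a)"
  define d where "d = N - 1"
  have d1: "1 \<le> d" using N2 unfolding d_def N_def by simp
  have sd: "real DIM('a) - 1 = real d" using N2 unfolding d_def N_def by simp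
  define hc where "hc = hausdorff_const (real d)"
  have hc: "0 < hc" unfolding hc_def by (rule hc_pos) simp
  define c' where "c' = hc / 2^d"
  have c': "0 < c'" unfolding c'_def using hc by simp
  define \<rho>' where "\<rho>' = \<rho> / (2 * N)"
  have N0: "0 < N" unfolding N_def by simp
  have \<rho>': "0 < \<rho>'" unfolding \<rho>'_def using rho N0 by simp
  define lo0 :: 'a where "lo0 = (\<Sum>j\<in>Basis. (if j = b then 0 else pc \<bullet> j - \<rho>') *\<^sub>R j)"
  define hi0 :: 'a where "hi0 = (\<Sum>j\<in>Basis. (if j = b then 1 else pc \<bullet> j + \<rho>') *\<^sub>R j)"
  have mBig: "emeasure lborel (cbox lo0 hi0) = ennreal ((2*\<rho>')^d)"
    unfolding lo0_def hi0_def d_def N_def using b \<rho>' by (intro slab_measure) auto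
  have "ennreal (c' * (2*\<rho>')^d) \<le> hausdorff_outer (real d) A"
  proof (rule ho_lower)
    fix C :: "nat \<Rightarrow> 'a set"
    assume cov: "A \<subseteq> (\<Union>i. C i)" and bd: "\<forall>i. bounded (C i) \<and> diameter (C i) \<le> 1"
    define q where "q i = (SOME q. q \<in> C i)" for i
    define Bx where "Bx i = cbox (\<Sum>j\<in>Basis. (if j = b then 0 else F (q i) \<bullet> j - diameter (C i)) *\<^sub>R j)
                              (\<Sum>j\<in>Basis. (if j = b then 1 else F (q i) \<bullet> j + diameter (C i)) *\<^sub>R j)" for i
    have dpos: "0 \<le> diameter (C i)" for i using bd diameter_ge_0 by blast
    have mBx: "emeasure lborel (Bx i) = ennreal ((2 * diameter (C i))^d)" for i
      unfolding Bx_def d_def N_def using b dpos by (intro slab_measure) auto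
    have sub: "cbox lo0 hi0 \<subseteq> (\<Union>i. Bx i)"
    proof
      fix z assume z: "z \<in> cbox lo0 hi0"
      have zb: "0 \<le> z \<bullet> b" "z \<bullet> b \<le> 1" using z b unfolding lo0_def hi0_def mem_box by (auto dest!: bspec[of _ _ b])
      have zj: "\<bar>z \<bullet> j - pc \<bullet> j\<bar> \<le> \<rho>'" if "j \<in> Basis" "j \<noteq> b" for j
        using z that unfolding lo0_def hi0_def mem_box by (auto dest!: bspec[of _ _ j])
      define p where "p = z - (z \<bullet> b) *\<^sub>R b"
      have pb: "p \<bullet> b = 0" unfolding p_def using b by (simp add: inner_diff_left)
      have pj: "p \<bullet> j = z \<bullet> j" if "j \<in> Basis" "j \<noteq> b" for j
        unfolding p_def using that b by (simp add: inner_diff_left inner_not_same_Basis)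
      have "norm (p - pc) \<le> (\<Sum>j\<in>Basis. \<bar>(p - pc) \<bullet> j\<bar>)" by (rule norm_le_l1)
      also have "\<dots> \<le> (\<Sum>j\<in>(Basis::'a set). \<rho>')"
      proof (rule sum_mono)
        fix j :: 'a assume j: "j \<in> Basis"
        show "\<bar>(p - pc) \<bullet> j\<bar> \<le> \<rho>'"
        proof (cases "j = b")
          case True then show ?thesis using pb p0b \<rho>' by (simp add: inner_diff_left)
        next
          case False then show ?thesis using pj[OF j False] zj[OF j False] by (simp add: inner_diff_left)
        qed
      qed
      also have "\<dots> = N * \<rho>'" unfolding N_def by simp
      also have "\<dots> < \<rho>" unfolding \<rho>'_def using N0 rho by simp
      finally have "p \<in> F ` A" using onto pb by blast
      then obtain y where y: "y \<in> A" "p = F y" by blast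
      then obtain i where yi: "y \<in> C i" using cov by blast
      then have qi: "q i \<in> C i" unfolding q_def by (rule someI)
      have "z \<in> Bx i" unfolding Bx_def mem_box
      proof
        fix j :: 'a assume j: "j \<in> Basis"
        show "(\<Sum>j\<in>Basis. (if j = b then 0 else F (q i) \<bullet> j - diameter (C i)) *\<^sub>R j) \<bullet> j \<le> z \<bullet> j \<and>
              z \<bullet> j \<le> (\<Sum>j\<in>Basis. (if j = b then 1 else F (q i) \<bullet> j + diameter (C i)) *\<^sub>R j) \<bullet> j"
        proof (cases "j = b")
          case True then show ?thesis using zb j by simp
        next
          case False
          have "\<bar>z \<bullet> j - F (q i) \<bullet> j\<bar> = \<bar>(F y - F (q i)) \<bullet> j\<bar>"
            using pj[OF j False] y by (simp add: inner_diff_left)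
          also have "\<dots> \<le> norm (F y - F (q i))" using j by (rule Basis_le_norm)
          also have "\<dots> \<le> norm (y - q i)" by (rule F1)
          also have "\<dots> \<le> diameter (C i)"
            using diameter_bounded_bound[of "C i" y "q i"] bd yi qi by (simp add: dist_norm)
          finally have "\<bar>z \<bullet> j - F (q i) \<bullet> j\<bar> \<le> diameter (C i)" .
          then show ?thesis using j False by (simp add: abs_le_iff)
        qed
      qed
      then show "z \<in> (\<Union>i. Bx i)" by blast
    qed
    have "emeasure lborel (cbox lo0 hi0) \<le> emeasure lborel (\<Union>i. Bx i)"
      using sub by (intro emeasure_mono) (auto simp: Bx_def)
    also have "\<dots> \<le> (\<Sum>i. emeasure lborel (Bx i))"
      by (rule emeasure_subadditive_countably) (auto simp: Bx_def)
    finally have m: "ennreal ((2*\<rho>')^d) \<le> (\<Sum>i. ennreal ((2 * diameter (C i))^d))"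
      unfolding mBig mBx .
    have trm: "ennreal (hausdorff_const (real d) * diameter (C i) powr real d)
          = ennreal c' * ennreal ((2 * diameter (C i))^d)" for i
    proof -
      have "diameter (C i) powr real d = diameter (C i) ^ d"
      proof (cases "diameter (C i) = 0")
        case True then show ?thesis using d1 by simp
      next
        case False then show ?thesis using dpos[of i] by (simp add: powr_realpow)
      qed
      then have "hausdorff_const (real d) * diameter (C i) powr real d = c' * (2 * diameter (C i))^d"
        unfolding c'_def hc_def by (simp add: power_mult_distrib)
      then show ?thesis using c' dpos[of i] by (simp add: ennreal_mult)
    qed
    have "ennreal (c' * (2*\<rho>')^d) = ennreal c' * ennreal ((2*\<rho>')^d)"
      using c' \<rho>' by (simp add: ennreal_mult)
    also have "\<dots> \<le> ennreal c' * (\<Sum>i. ennreal ((2 * diameter (C i))^d))"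
      using m by (rule mult_left_mono) simp
    also have "\<dots> = (\<Sum>i. ennreal (hausdorff_const (real d) * diameter (C i) powr real d))"
      unfolding trm by simp
    finally show "ennreal (c' * (2*\<rho>')^d) \<le> (\<Sum>i. ennreal (hausdorff_const (real d) * diameter (C i) powr real d))" .
  qed
  moreover have "0 < ennreal (c' * (2*\<rho>')^d)" using c' \<rho>' by simp
  ultimately show ?thesis unfolding sd by (rule less_le_trans[rotated])
qed

definition prj :: "'a::euclidean_space \<Rightarrow> 'a \<Rightarrow> 'a" where
  "prj b v = v - (v \<bullet> b) *\<^sub>R b"

lemma prj_b: "b \<in> Basis \<Longrightarrow> prj b v \<bullet> b = 0"
  unfolding prj_def by (simp add: inner_diff_left)

lemma prj_diff: "prj b u - prj b v = prj b (u - v)"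
  unfolding prj_def by (simp add: inner_diff_left algebra_simps)

lemma prj_norm: assumes "b \<in> Basis" shows "norm (prj b w) \<le> norm w"
proof -
  have "prj b w \<bullet> prj b w = w \<bullet> w - (w \<bullet> b)\<^sup>2"
    unfolding prj_def using assms by (simp add: inner_diff_left inner_diff_right power2_eq_square inner_commute)
  then show ?thesis unfolding norm_le by simp
qed

lemma prj_lip: "b \<in> Basis \<Longrightarrow> norm (prj b u - prj b v) \<le> norm (u - v)"
  unfolding prj_diff by (rule prj_norm)

lemma prj_decomp: "v = prj b v + (v \<bullet> b) *\<^sub>R b"
  unfolding prj_def by simp

lemma iso_norm: "(\<And>y z. dist (T y) (T z) = dist y z) \<Longrightarrow> norm (T y - T z) = norm (y - z)"
  by (metis dist_norm)

context
  fixes \<Omega> :: "'a::euclidean_space set" and T :: "'a \<Rightarrow> 'a" and b :: 'a and \<phi> :: "'a \<Rightarrow> real" and L :: real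
  assumes opn: "open \<Omega>" and T: "\<And>y z. dist (T y) (T z) = dist y z" and b: "b \<in> Basis"
   and phi: "L-lipschitz_on {z. z \<bullet> b = 0} \<phi>"
begin

lemma L0: "0 \<le> L" using phi lipschitz_on_nonneg by blast

lemma phi_lip: "\<bar>\<phi> (prj b u) - \<phi> (prj b v)\<bar> \<le> L * norm (u - v)"
proof -
  have "dist (\<phi> (prj b u)) (\<phi> (prj b v)) \<le> L * dist (prj b u) (prj b v)"
    by (rule lipschitz_onD[OF phi]) (auto simp: prj_b[OF b])
  also have "\<dots> \<le> L * norm (u - v)"
    using prj_lip[OF b] L0 by (simp add: dist_norm mult_left_mono)
  finally show ?thesis by (simp add: dist_real_def)
qed

lemma Tnorm: "norm (T y - T z) = norm (y - z)" using iso_norm[OF T] .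

lemma frontier_on_graph:
  assumes rep: "\<Omega> \<inter> ball x r = {y \<in> ball x r. T y \<bullet> b < \<phi> (T y - (T y \<bullet> b) *\<^sub>R b)}"
    and y: "y \<in> frontier \<Omega>" "y \<in> ball x r"
  shows "T y \<bullet> b = \<phi> (prj b (T y))"
proof (rule ccontr)
  assume ne: "T y \<bullet> b \<noteq> \<phi> (prj b (T y))"
  have yn: "y \<notin> \<Omega>" using y(1) opn by (simp add: frontier_def interior_open)
  have "\<not> T y \<bullet> b < \<phi> (prj b (T y))"
  proof
    assume "T y \<bullet> b < \<phi> (prj b (T y))"
    then have "y \<in> \<Omega> \<inter> ball x r" using y(2) unfolding rep prj_def by simp
    then show False using yn by simp
  qed
  then have g: "0 < T y \<bullet> b - \<phi> (prj b (T y))" using ne by simp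
  define g where "g = T y \<bullet> b - \<phi> (prj b (T y))"
  have g0: "0 < g" using g unfolding g_def .
  obtain \<epsilon> where \<epsilon>: "0 < \<epsilon>" "ball y \<epsilon> \<subseteq> ball x r"
    using y(2) open_ball open_contains_ball by blast
  have "y \<in> closure \<Omega>" using y(1) by (simp add: frontier_def)
  then obtain z where z: "z \<in> \<Omega>" "dist y z < min \<epsilon> (g / (1 + L))"
    using closure_approachableD[of y \<Omega> "min \<epsilon> (g / (1 + L))"] g0 \<epsilon> L0 by auto
  have zb: "z \<in> ball x r" using z \<epsilon> by auto
  then have lt: "T z \<bullet> b < \<phi> (prj b (T z))" using z(1) rep unfolding prj_def by blast
  define \<delta> where "\<delta> = norm (z - y)"
  have \<delta>: "(1 + L) * \<delta> < g"
  proof -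
    have "\<delta> < g / (1 + L)" using z(2) unfolding \<delta>_def by (simp add: dist_norm norm_minus_commute)
    then show ?thesis using L0 by (simp add: field_simps)
  qed
  have "\<bar>T z \<bullet> b - T y \<bullet> b\<bar> \<le> \<delta>"
    using Basis_le_norm[OF b, of "T z - T y"] Tnorm[of z y] unfolding \<delta>_def by (simp add: inner_diff_left)
  moreover have "\<bar>\<phi> (prj b (T z)) - \<phi> (prj b (T y))\<bar> \<le> L * \<delta>"
    using phi_lip[of "T z" "T y"] Tnorm[of z y] unfolding \<delta>_def by simp
  ultimately show False using lt \<delta> unfolding g_def by (simp add: algebra_simps abs_le_iff)
qed

lemma graph_in_frontier:
  assumes surj: "surj T"
    and rep: "\<Omega> \<inter> ball x0 r = {y \<in> ball x0 r. T y \<bullet> b < \<phi> (T y - (T y \<bullet> b) *\<^sub>R b)}"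
    and x0: "x0 \<in> frontier \<Omega>" and \<rho>: "0 < \<rho>" "\<rho> \<le> r"
    and p: "p \<bullet> b = 0" "(1 + L) * norm (p - prj b (T x0)) < \<rho>"
  shows "\<exists>y. y \<in> frontier \<Omega> \<and> y \<in> ball x0 \<rho> \<and> prj b (T y) = p"
proof -
  define p0 where "p0 = prj b (T x0)"
  have x0b: "T x0 \<bullet> b = \<phi> p0"
    unfolding p0_def using frontier_on_graph[OF rep x0] \<rho> by simp
  have Tx0: "T x0 = p0 + \<phi> p0 *\<^sub>R b" using prj_decomp[of "T x0" b] x0b unfolding p0_def by simp
  define w where "w = p + \<phi> p *\<^sub>R b"
  obtain y where Ty: "T y = w" using surj by (metis surjD)
  have bb: "b \<bullet> b = 1" using b by simp
  have wb: "w \<bullet> b = \<phi> p" unfolding w_def using p(1) bb by (simp add: inner_add_left)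
  have prjw: "prj b w = p" unfolding prj_def wb unfolding w_def by simp
  have "norm (w - T x0) = norm ((p - p0) + (\<phi> p - \<phi> p0) *\<^sub>R b)"
    unfolding w_def Tx0 by (simp add: algebra_simps)
  also have "\<dots> \<le> norm (p - p0) + \<bar>\<phi> p - \<phi> p0\<bar>"
    using norm_triangle_ineq[of "p - p0" "(\<phi> p - \<phi> p0) *\<^sub>R b"] b by simp
  also have "\<bar>\<phi> p - \<phi> p0\<bar> \<le> L * norm (p - p0)"
  proof -
    have "dist (\<phi> p) (\<phi> p0) \<le> L * dist p p0"
      by (rule lipschitz_onD[OF phi]) (auto simp: p(1) p0_def prj_b[OF b])
    then show ?thesis by (simp add: dist_norm dist_real_def)
  qed
  finally have wd: "norm (w - T x0) < \<rho>" using p(2) unfolding p0_def by (simp add: algebra_simps)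
  have yd: "dist x0 y < \<rho>" using wd Tnorm[of y x0] Ty by (simp add: dist_norm norm_minus_commute)
  have yr: "y \<in> ball x0 r" using yd \<rho> by simp
  have yn: "y \<notin> \<Omega>"
  proof
    assume "y \<in> \<Omega>"
    then have "y \<in> \<Omega> \<inter> ball x0 r" using yr by simp
    then have "T y \<bullet> b < \<phi> (prj b (T y))" unfolding rep prj_def by simp
    then show False unfolding Ty prjw wb by simp
  qed
  have yc: "y \<in> closure \<Omega>"
    unfolding closure_approachable
  proof (intro allI impI)
    fix e :: real assume e: "0 < e"
    define t where "t = min (e / 2) ((\<rho> - dist x0 y) / 2)"
    have t0: "0 < t" unfolding t_def using e yd by simp
    obtain z where Tz: "T z = w - t *\<^sub>R b" using surj by (metis surjD)
    have dzy: "dist z y = t"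
      using Tnorm[of z y] Tz Ty b t0 by (simp add: dist_norm)
    have zr: "z \<in> ball x0 r"
    proof -
      have "dist x0 z \<le> dist x0 y + dist y z" by (rule dist_triangle)
      also have "\<dots> < \<rho>"
      proof -
        have "t \<le> (\<rho> - dist x0 y) / 2" unfolding t_def by (rule min.cobounded2)
        moreover have "dist y z = t" using dzy by (simp add: dist_commute)
        ultimately show ?thesis using yd by argo
      qed
      finally show ?thesis using \<rho> by simp
    qed
    have "prj b (T z) = p" unfolding Tz prj_def using wb bb prjw unfolding prj_def
      by (simp add: inner_diff_left algebra_simps)
    moreover have "T z \<bullet> b = \<phi> p - t" unfolding Tz using wb bb by (simp add: inner_diff_left)
    ultimately have "T z \<bullet> b < \<phi> (prj b (T z))" using t0 by simp
    then have "z \<in> \<Omega> \<inter> ball x0 r" unfolding rep prj_def using zr by simp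
    moreover have "dist z y < e" using dzy t_def e by simp
    ultimately show "\<exists>z\<in>\<Omega>. dist z y < e" by blast
  qed
  have "y \<in> frontier \<Omega>" using yn yc opn by (simp add: frontier_def interior_open)
  moreover have "prj b (T y) = p" using Ty prjw by simp
  ultimately show ?thesis using yd by auto
qed

end

context
  fixes \<Omega> :: "'a::euclidean_space set" and T :: "'a \<Rightarrow> 'a" and b :: 'a and \<phi> :: "'a \<Rightarrow> real" and L :: real
  assumes opn: "open \<Omega>" and T: "\<And>y z. dist (T y) (T z) = dist y z" and b: "b \<in> Basis"
   and phi: "L-lipschitz_on {z. z \<bullet> b = 0} \<phi>"
   and N2: "DIM('a) \<ge> 2"
begin

lemma patch_finite:
  assumes rep: "\<Omega> \<inter> ball x r = {y \<in> ball x r. T y \<bullet> b < \<phi> (T y - (T y \<bullet> b) *\<^sub>R b)}"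
    and r: "0 < r"
  shows "hausdorff_outer (real DIM('a) - 1) (frontier \<Omega> \<inter> ball x r) < \<infinity>"
proof (rule graph_finite[OF N2 b _ r, where F="\<lambda>y. prj b (T y)" and pc="prj b (T x)" and Kc="1 + L"])
  have L0: "0 \<le> L" using L0[OF opn T b phi] .
  show "0 \<le> 1 + L" using L0 by simp
  fix y assume y: "y \<in> frontier \<Omega> \<inter> ball x r"
  show "prj b (T y) \<bullet> b = 0" by (rule prj_b[OF b])
  have "norm (prj b (T y) - prj b (T x)) \<le> norm (T y - T x)" by (rule prj_lip[OF b])
  also have "\<dots> = norm (y - x)" by (rule Tnorm[OF opn T b phi])
  also have "\<dots> < r" using y by (simp add: dist_norm norm_minus_commute)
  finally show "norm (prj b (T y) - prj b (T x)) < r" .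
next
  fix y z assume y: "y \<in> frontier \<Omega> \<inter> ball x r" and z: "z \<in> frontier \<Omega> \<inter> ball x r"
  have L0: "0 \<le> L" using L0[OF opn T b phi] .
  have gy: "T y \<bullet> b = \<phi> (prj b (T y))" using frontier_on_graph[OF opn T b phi rep] y by auto
  have gz: "T z \<bullet> b = \<phi> (prj b (T z))" using frontier_on_graph[OF opn T b phi rep] z by auto
  define \<Delta> where "\<Delta> = prj b (T y) - prj b (T z)"
  have "T y - T z = \<Delta> + (\<phi> (prj b (T y)) - \<phi> (prj b (T z))) *\<^sub>R b"
    using prj_decomp[of "T y" b] prj_decomp[of "T z" b] gy gz unfolding \<Delta>_def
    by (metis (no_types, lifting) add_diff_add scaleR_diff_left)
  then have "norm (T y - T z) \<le> norm \<Delta> + \<bar>\<phi> (prj b (T y)) - \<phi> (prj b (T z))\<bar>"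
    using norm_triangle_ineq[of \<Delta> "(\<phi> (prj b (T y)) - \<phi> (prj b (T z))) *\<^sub>R b"] b by simp
  also have "\<bar>\<phi> (prj b (T y)) - \<phi> (prj b (T z))\<bar> \<le> L * norm \<Delta>"
  proof -
    have "dist (\<phi> (prj b (T y))) (\<phi> (prj b (T z))) \<le> L * dist (prj b (T y)) (prj b (T z))"
      by (rule lipschitz_onD[OF phi]) (auto simp: prj_b[OF b])
    then show ?thesis unfolding \<Delta>_def by (simp add: dist_norm dist_real_def)
  qed
  finally have "norm (T y - T z) \<le> (1 + L) * norm \<Delta>" by (simp add: algebra_simps)
  then show "norm (y - z) \<le> (1 + L) * norm (prj b (T y) - prj b (T z))"
    using Tnorm[OF opn T b phi, of y z] unfolding \<Delta>_def by simp
qed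

lemma patch_pos:
  assumes surj: "surj T"
    and rep: "\<Omega> \<inter> ball x0 r = {y \<in> ball x0 r. T y \<bullet> b < \<phi> (T y - (T y \<bullet> b) *\<^sub>R b)}"
    and x0: "x0 \<in> frontier \<Omega>" and \<rho>: "0 < \<rho>" "\<rho> \<le> r"
  shows "0 < hausdorff_outer (real DIM('a) - 1) (frontier \<Omega> \<inter> ball x0 \<rho>)"
proof -
  have L0: "0 \<le> L" using L0[OF opn T b phi] .
  show ?thesis
  proof (rule graph_pos[OF N2 b _ prj_b[OF b], where F="\<lambda>y. prj b (T y)" and \<rho>="\<rho> / (1 + L)"])
    show "0 < \<rho> / (1 + L)" using \<rho> L0 by simp
    fix y z
    show "norm (prj b (T y) - prj b (T z)) \<le> norm (y - z)"
      using prj_lip[OF b, of "T y" "T z"] Tnorm[OF opn T b phi, of y z] by simp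
  next
    fix p assume p: "p \<bullet> b = 0" "norm (p - prj b (T x0)) < \<rho> / (1 + L)"
    then have "(1 + L) * norm (p - prj b (T x0)) < \<rho>" using L0 by (simp add: field_simps)
    then obtain y where "y \<in> frontier \<Omega>" "y \<in> ball x0 \<rho>" "prj b (T y) = p"
      using graph_in_frontier[OF opn T b phi surj rep x0 \<rho> p(1)] by blast
    then show "p \<in> (\<lambda>y. prj b (T y)) ` (frontier \<Omega> \<inter> ball x0 \<rho>)" by blast
  qed
qed

end

theorem lemma3p2:
  fixes \<Omega> :: "'a::euclidean_space set"
    and r L R :: real
    and e et :: "'m::finite \<Rightarrow> 'a set"
  assumes "DIM('a) \<ge> 2"
    and "0 < r"
    and "lip_domain_class r L R \<Omega>"
    and "electrodes \<Omega> e"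
    and "extended_electrodes \<Omega> e et"
  shows "(\<forall>f g. L2star (bdry_measure \<Omega>) f \<longrightarrow> L2star (bdry_measure \<Omega>) g \<longrightarrow>
            integral\<^sup>L (bdry_measure \<Omega>)
              (\<lambda>x. E_op (bdry_measure \<Omega>) e et (P_op (bdry_measure \<Omega>) e f) x * g x)
          = integral\<^sup>L (bdry_measure \<Omega>) (\<lambda>x. f x * Qop (bdry_measure \<Omega>) e et g x))
    \<and> (SUP \<phi>\<in>{\<phi>. H12star \<Omega> \<phi> \<and> H12norm \<Omega> \<phi> \<le> 1}.
          ereal (L2norm (bdry_measure \<Omega>)
            (\<lambda>x. \<phi> x - E_op (bdry_measure \<Omega>) e et (P_op (bdry_measure \<Omega>) e \<phi>) x)))
      = (SUP g\<in>{g. L2star (bdry_measure \<Omega>) g \<and> L2norm (bdry_measure \<Omega>) g \<le> 1}.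
          Hm12norm \<Omega> (\<lambda>x. g x - Qop (bdry_measure \<Omega>) e et g x))"
proof -
  note N2 = assms(1) and r = assms(2)
  note ld = assms(3)[unfolded lip_domain_class_def]
  have opn: "open \<Omega>" using ld by (rule conjunct1)
  have sub: "\<Omega> \<subseteq> ball 0 R" using ld[THEN conjunct2, THEN conjunct2, THEN conjunct2] by (rule conjunct1)
  note ld4 = ld[THEN conjunct2, THEN conjunct2, THEN conjunct2, THEN conjunct2]
  have patch: "\<exists>(T :: 'a \<Rightarrow> 'a) (b :: 'a) (\<phi> :: 'a \<Rightarrow> real).
        (\<forall>y z. dist (T y) (T z) = dist y z) \<and> surj T \<and> b \<in> Basis \<and>
        L-lipschitz_on {z. z \<bullet> b = 0} \<phi> \<and>
        \<Omega> \<inter> ball x r = {y \<in> ball x r. T y \<bullet> b < \<phi> (T y - (T y \<bullet> b) *\<^sub>R b)}"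
    if "x \<in> frontier \<Omega>" for x
    by (rule bspec[OF ld4 that])
  define s where "s = real DIM('a) - 1"
  define HM where "HM = (hausdorff_measure s :: 'a measure)"
  define M where "M = bdry_measure \<Omega>"
  have M_eq: "M = restrict_space HM (frontier \<Omega>)" unfolding M_def bdry_measure_def HM_def s_def ..
  have fr_borel: "frontier \<Omega> \<in> sets borel" by (rule borel_closed) (rule frontier_closed)
  have spaceM: "space M = frontier \<Omega>" unfolding M_eq HM_def by (simp add: space_restrict_space)
  have setsM: "frontier \<Omega> \<inter> A \<in> sets M" if "A \<in> sets borel" for A
  proof -
    have "frontier \<Omega> \<inter> A \<in> (\<inter>) (frontier \<Omega>) ` sets borel" using that by (rule imageI)
    then show ?thesis unfolding M_eq HM_def sets_restrict_space hm_sets .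
  qed
  have frHM: "frontier \<Omega> \<inter> space HM \<in> sets HM" unfolding HM_def using fr_borel by simp
  have emM: "emeasure M A = emeasure HM A" if "A \<subseteq> frontier \<Omega>" for A
    unfolding M_eq by (rule emeasure_restrict_space[OF frHM that])
  have relopen: "A \<in> sets M \<and> A \<in> sets borel \<and> A \<subseteq> frontier \<Omega> \<and> (\<exists>U. open U \<and> A = frontier \<Omega> \<inter> U)"
    if "openin (top_of_set (frontier \<Omega>)) A" for A
  proof -
    have "\<exists>U. open U \<and> A = frontier \<Omega> \<inter> U" using that by (simp only: openin_open)
    then obtain U where U: "open U" "A = frontier \<Omega> \<inter> U" by (elim exE conjE)
    have Ub: "U \<in> sets borel" using U(1) by (rule borel_open)
    show ?thesis
    proof (intro conjI exI)
      show "A \<in> sets M" unfolding U(2) by (rule setsM[OF Ub])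
      show "A \<in> sets borel" unfolding U(2) using fr_borel Ub by (rule sets.Int)
      show "A \<subseteq> frontier \<Omega>" unfolding U(2) by (rule Int_lower1)
      show "open U" by (rule U(1))
      show "A = frontier \<Omega> \<inter> U" by (rule U(2))
    qed
  qed
  note el = assms(4)[unfolded electrodes_def]
  note ex = assms(5)[unfolded extended_electrodes_def]
  have e_rel1: "openin (top_of_set (frontier \<Omega>)) (e m)" for m
    using el[THEN conjunct1, rule_format, of m] by (rule conjunct1)
  have e_rel2: "e m \<noteq> {}" for m
    using el[THEN conjunct1, rule_format, of m] by (rule conjunct2)
  have e_disj: "\<And>m m'. m \<noteq> m' \<Longrightarrow> e m \<inter> e m' = {}" using el[THEN conjunct2] by simp
  have et_rel: "openin (top_of_set (frontier \<Omega>)) (et m)" for m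
    using ex[THEN conjunct1, rule_format, of m] by (rule conjunct1)
  have et_disj: "\<And>m m'. m \<noteq> m' \<Longrightarrow> et m \<inter> et m' = {}" using ex[THEN conjunct2, THEN conjunct1] by simp
  have et_null: "emeasure HM (frontier \<Omega> - (\<Union>m. et m)) = 0"
    using ex[THEN conjunct2, THEN conjunct2] unfolding HM_def s_def .
  have e_sets: "\<And>m. e m \<in> sets M" using relopen[OF e_rel1] by (rule conjunct1)
  have et_sets: "\<And>m. et m \<in> sets M" using relopen[OF et_rel] by (rule conjunct1)
  have et_borel: "\<And>m. et m \<in> sets borel" using relopen[OF et_rel] by simp
  have S_L2: "L2star M \<phi>" if "\<phi> \<in> {\<phi>. H12star \<Omega> \<phi> \<and> H12norm \<Omega> \<phi> \<le> 1}" for \<phi>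
  proof -
    have "H12star \<Omega> \<phi>" using that by simp
    then have h: "(\<exists>u. trace_of \<Omega> u \<phi>)" "integral\<^sup>L (bdry_measure \<Omega>) \<phi> = 0"
      unfolding H12star_def by simp_all
    from h(1) obtain u where "trace_of \<Omega> u \<phi>" by (elim exE)
    then have "L2 (bdry_measure \<Omega>) \<phi>" unfolding trace_of_def by (rule conjunct1)
    then show ?thesis using h(2) unfolding L2star_def M_def by simp
  qed
  have goal: "(\<forall>f g. L2star M f \<longrightarrow> L2star M g \<longrightarrow>
            integral\<^sup>L M (\<lambda>x. E_op M e et (P_op M e f) x * g x)
          = integral\<^sup>L M (\<lambda>x. f x * Qop M e et g x))
    \<and> (SUP \<phi>\<in>{\<phi>. H12star \<Omega> \<phi> \<and> H12norm \<Omega> \<phi> \<le> 1}.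
          ereal (L2norm M (\<lambda>x. \<phi> x - E_op M e et (P_op M e \<phi>) x)))
      = (SUP g\<in>{g. L2star M g \<and> L2norm M g \<le> 1}. Hm12norm \<Omega> (\<lambda>x. g x - Qop M e et g x))"
  proof (cases "\<forall>A::'a set. emeasure HM A = 0")
    case True
    have z: "emeasure M (space M) = 0" using emM[of "frontier \<Omega>"] spaceM True by simp
    have sn: "space M \<in> null_sets M" using z by (intro null_setsI) simp_all
    have intz: "integral\<^sup>L M f = 0" for f :: "'a \<Rightarrow> real"
    proof (rule integral_eq_zero_AE)
      show "AE x in M. f x = 0"
        by (rule AE_I'[OF sn]) (rule Collect_subset)
    qed
    have Gne: "{g. L2star M g \<and> L2norm M g \<le> 1} \<noteq> {}"
    proof -
      have "(\<lambda>x. 0) \<in> {g. L2star M g \<and> L2norm M g \<le> 1}" using L2_zero by (simp add: L2norm_def)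
      then show ?thesis by (rule ex_in_conv[THEN iffD1, OF exI])
    qed
    have Hz: "Hm12norm \<Omega> (\<lambda>x. g x - Qop M e et g x) = (SUP \<phi>\<in>{\<phi>. H12star \<Omega> \<phi> \<and> H12norm \<Omega> \<phi> \<le> 1}. ereal 0)" for g
      unfolding Hm12norm_def M_def[symmetric] intz by simp
    show ?thesis using Gne by (simp add: intz L2norm_def Hz)
  next
    case False
    have hmeq: "\<forall>A\<in>sets borel. emeasure HM A = hausdorff_outer s A"
      using hm_cases[of s, where 'a='a]
    proof (elim disjE)
      assume "\<forall>A::'a set. emeasure (hausdorff_measure s) A = 0"
      then show ?thesis using False unfolding HM_def by simp
    next
      assume "\<forall>A\<in>sets borel. emeasure (hausdorff_measure s) A = hausdorff_outer s (A::'a set)"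
      then show ?thesis unfolding HM_def .
    qed
    have pb: "frontier \<Omega> \<inter> ball x r' \<in> sets borel" for x r'
      by (rule sets.Int[OF fr_borel borel_open[OF open_ball]])
    have fin: "finite_measure M"
    proof (rule finite_measureI)
      have cpt: "compact (frontier \<Omega>)"
        by (rule compact_frontier_bounded) (rule bounded_subset[OF bounded_ball sub])
      have opb: "\<And>x. x \<in> frontier \<Omega> \<Longrightarrow> open (ball x r)" by simp
      have cvr: "frontier \<Omega> \<subseteq> (\<Union>x\<in>frontier \<Omega>. ball x r)"
      proof
        fix x assume "x \<in> frontier \<Omega>"
        moreover have "x \<in> ball x r" using r by simp
        ultimately show "x \<in> (\<Union>x\<in>frontier \<Omega>. ball x r)" by (rule UN_I)
      qed
      obtain X where X: "X \<subseteq> frontier \<Omega>" "finite X" "frontier \<Omega> \<subseteq> (\<Union>x\<in>X. ball x r)"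
        by (rule compactE_image[OF cpt opb cvr])
      have pf: "emeasure HM (frontier \<Omega> \<inter> ball x r) < \<infinity>" if x: "x \<in> X" for x
      proof -
        have xf: "x \<in> frontier \<Omega>" using x X(1) by (rule subsetD[rotated])
        obtain T :: "'a \<Rightarrow> 'a" and b :: 'a and \<phi> :: "'a \<Rightarrow> real" where Tb: "\<forall>y z. dist (T y) (T z) = dist y z" "surj T" "b \<in> Basis"
          "L-lipschitz_on {z. z \<bullet> b = 0} \<phi>"
          "\<Omega> \<inter> ball x r = {y \<in> ball x r. T y \<bullet> b < \<phi> (T y - (T y \<bullet> b) *\<^sub>R b)}"
          by atomize_elim (rule patch[OF xf])
        have Tb1: "\<And>y z. dist (T y) (T z) = dist y z" using Tb(1) by simp
        have "hausdorff_outer s (frontier \<Omega> \<inter> ball x r) < \<infinity>"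
          unfolding s_def by (rule patch_finite[OF opn Tb1 Tb(3) Tb(4) N2 Tb(5) r])
        then show ?thesis using hmeq pb[of x r] by simp
      qed
      have UNb: "(\<Union>x\<in>X. frontier \<Omega> \<inter> ball x r) \<in> sets HM"
        unfolding HM_def hm_sets by (rule sets.finite_UN[OF X(2)]) (rule pb)
      have "emeasure M (space M) = emeasure HM (frontier \<Omega>)" using emM spaceM by simp
      also have "\<dots> \<le> emeasure HM (\<Union>x\<in>X. frontier \<Omega> \<inter> ball x r)"
        using X(3) UNb by (intro emeasure_mono) auto
      also have "\<dots> \<le> (\<Sum>x\<in>X. emeasure HM (frontier \<Omega> \<inter> ball x r))"
        using pb by (intro emeasure_subadditive_finite[OF X(2)]) (auto simp: HM_def)
      also have "\<dots> < \<infinity>" using X(2) pf by simp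
      finally show "emeasure M (space M) \<noteq> \<infinity>" by simp
    qed
    have e_pos: "0 < measure M (e m)" for m
    proof -
      have "\<exists>x0. x0 \<in> e m" unfolding ex_in_conv by (rule e_rel2)
      then obtain x0 where x0: "x0 \<in> e m" by (elim exE)
      have "\<exists>U. open U \<and> e m = frontier \<Omega> \<inter> U" using relopen[OF e_rel1[of m]] by simp
      then obtain U where U: "open U" "e m = frontier \<Omega> \<inter> U" by (elim exE conjE)
      have x0f: "x0 \<in> frontier \<Omega>" "x0 \<in> U" using x0 unfolding U(2) by simp_all
      have "\<exists>\<epsilon>>0. ball x0 \<epsilon> \<subseteq> U" using open_contains_ball[THEN iffD1, OF U(1)] x0f(2) by (rule bspec)
      then obtain \<epsilon> where \<epsilon>: "0 < \<epsilon>" "ball x0 \<epsilon> \<subseteq> U" by (elim exE conjE)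
      define \<rho> where "\<rho> = min \<epsilon> r"
      have \<rho>: "0 < \<rho>" "\<rho> \<le> r" unfolding \<rho>_def using \<epsilon> r by auto
      obtain T :: "'a \<Rightarrow> 'a" and b :: 'a and \<phi> :: "'a \<Rightarrow> real" where Tb: "\<forall>y z. dist (T y) (T z) = dist y z" "surj T" "b \<in> Basis"
          "L-lipschitz_on {z. z \<bullet> b = 0} \<phi>"
          "\<Omega> \<inter> ball x0 r = {y \<in> ball x0 r. T y \<bullet> b < \<phi> (T y - (T y \<bullet> b) *\<^sub>R b)}"
        by atomize_elim (rule patch[OF x0f(1)])
      have Tb1: "\<And>y z. dist (T y) (T z) = dist y z" using Tb(1) by simp
      have bU: "ball x0 \<rho> \<subseteq> U" using \<epsilon>(2) unfolding \<rho>_def by auto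
      have "0 < hausdorff_outer s (frontier \<Omega> \<inter> ball x0 \<rho>)"
        unfolding s_def by (rule patch_pos[OF opn Tb1 Tb(3) Tb(4) N2 Tb(2) Tb(5) x0f(1) \<rho>])
      also have "\<dots> \<le> hausdorff_outer s (e m)"
        unfolding U(2) using bU by (intro ho_mono) auto
      also have "\<dots> = emeasure M (e m)"
      proof -
        have "e m \<in> sets borel" "e m \<subseteq> frontier \<Omega>" using relopen[OF e_rel1[of m]] by simp_all
        then show ?thesis using hmeq emM[of "e m"] by simp
      qed
      finally have pos: "0 < emeasure M (e m)" .
      have "emeasure M (e m) \<noteq> \<infinity>" using finite_measure.emeasure_finite[OF fin] by (simp add: infinity_ennreal_def)
      then have "emeasure M (e m) < \<infinity>" by (simp add: less_top)
      then show ?thesis using pos unfolding measure_def by (simp add: enn2real_positive_iff)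
    qed
    have cov: "AE x in M. x \<in> (\<Union>m. et m)"
    proof (rule AE_I')
      have "(\<Union>m. et m) \<in> sets borel"
        by (rule sets.finite_UN) (simp_all add: et_borel)
      then have Nb: "frontier \<Omega> - (\<Union>m. et m) \<in> sets borel" using fr_borel by (intro sets.Diff)
      have "frontier \<Omega> \<inter> (frontier \<Omega> - (\<Union>m. et m)) = frontier \<Omega> - (\<Union>m. et m)" by (rule Int_absorb1) (rule Diff_subset)
      then have NM: "frontier \<Omega> - (\<Union>m. et m) \<in> sets M" using setsM[OF Nb] by simp
      moreover have "emeasure M (frontier \<Omega> - (\<Union>m. et m)) = 0"
        using emM[OF Diff_subset] et_null by simp
      ultimately show "frontier \<Omega> - (\<Union>m. et m) \<in> null_sets M" by (intro null_setsI)
      show "{x \<in> space M. x \<notin> (\<Union>m. et m)} \<subseteq> frontier \<Omega> - (\<Union>m. et m)" unfolding spaceM by (rule subsetI) simp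
    qed
    have p1: "integral\<^sup>L M (\<lambda>x. E_op M e et (P_op M e f) x * g x) = integral\<^sup>L M (\<lambda>x. f x * Qop M e et g x)"
      if "integrable M f" "integrable M g" "integral\<^sup>L M g = 0" for f g
      apply (rule part1_abs[where M=M and e=e and et=et])
               apply (rule fin)
              apply (rule e_sets)
             apply (rule et_sets)
            apply (erule e_disj)
           apply (erule et_disj)
          apply (rule e_pos)
         apply (rule cov)
      using that by simp_all
    have p2: "(SUP \<phi>\<in>S. ereal (L2norm M (\<lambda>x. \<phi> x - E_op M e et (P_op M e \<phi>) x)))
       = (SUP g\<in>{g. L2star M g \<and> L2norm M g \<le> 1}. SUP \<phi>\<in>S.
            ereal \<bar>integral\<^sup>L M (\<lambda>x. (g x - Qop M e et g x) * \<phi> x)\<bar>)"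
      if "\<And>\<phi>. \<phi> \<in> S \<Longrightarrow> L2star M \<phi>" for S
      apply (rule part2_abs[where M=M and e=e and et=et])
               apply (rule fin)
              apply (rule e_sets)
             apply (rule et_sets)
            apply (erule e_disj)
           apply (erule et_disj)
          apply (rule e_pos)
         apply (rule cov)
      using that by simp
    show ?thesis
    proof (intro conjI allI impI)
      fix f g assume f: "L2star M f" and g: "L2star M g"
      have fi: "integrable M f" using f L2_integrable[OF fin] unfolding L2star_def by simp
      have gi: "integrable M g" using g L2_integrable[OF fin] unfolding L2star_def by simp
      have g0: "integral\<^sup>L M g = 0" using g unfolding L2star_def by simp
      show "integral\<^sup>L M (\<lambda>x. E_op M e et (P_op M e f) x * g x) = integral\<^sup>L M (\<lambda>x. f x * Qop M e et g x)"
        using fi gi g0 by (rule p1)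
    next
      show "(SUP \<phi>\<in>{\<phi>. H12star \<Omega> \<phi> \<and> H12norm \<Omega> \<phi> \<le> 1}.
          ereal (L2norm M (\<lambda>x. \<phi> x - E_op M e et (P_op M e \<phi>) x)))
      = (SUP g\<in>{g. L2star M g \<and> L2norm M g \<le> 1}. Hm12norm \<Omega> (\<lambda>x. g x - Qop M e et g x))"
        unfolding Hm12norm_def M_def[symmetric] by (rule p2) (rule S_L2)
    qed
  qed
  then show ?thesis unfolding M_def .
qed

end
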